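(* Let $\mathcal C$ be an $R$-coring satisfying the left $\alpha$-condition, and suppose $\mathcal C=\bigoplus_{i\in I}C_i$ as left $\mathcal C$-comodules with each $C_i$ finitely generated (as a left $R$-module). Then $\mathrm{Rat}^{\mathcal C}({}^*\mathcal C)$ is dense in ${}^*\mathcal C$ in the finite topology, and equivalently, $\mathrm{Rat}^{\mathcal C}$ is an exact functor.
   Context: An $R$-coring is a triple $(\mathcal C,\Delta,\varepsilon)$ with $\mathcal C$ an $R$-bimodule and $\Delta:\mathcal C\to\mathcal C\otimes_R\mathcal C$, $\varepsilon:\mathcal C\to R$ coassociative and counital $R$-bimodule maps; write $\Delta(c)=c_{(1)}\otimes_R c_{(2)}$. ${}^*\mathcal C={}_R\mathrm{Hom}(\mathcal C,R)$ is a ring with product $(f\#g)(c)=g(c_{(1)}f(c_{(2)}))$. $\mathcal C$ satisfies the left $\alpha$-condition if it is locally projective as a left $R$-module; then right $\mathcal C$-comodules form a full subcategory of right ${}^*\mathcal C$-modules (a comodule $N$, $n\mapsto n_{[0]}\otimes n_{[1]}$, acts by $n\cdot f=n_{[0]}f(n_{[1]})$). For a right ${}^*\mathcal C$-module $M$, $\mathrm{Rat}^{\mathcal C}(M)$ is the set of $m\in M$ for which there is $\sum_i m_i\otimes c_i\in M\otimes_R\mathcal C$ with $m\cdot f=\sum_i m_if(c_i)$ for all $f\in{}^*\mathcal C$; $\mathrm{Rat}^{\mathcal C}$ is a left exact functor from right ${}^*\mathcal C$-modules to right $\mathcal C$-comodules. Left $\mathcal C$-comodules are left $R$-modules with coassociative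 counital coactions $m\mapsto m_{[-1]}\otimes m_{[0]}\in\mathcal C\otimes_R M$. The finite topology on ${}^*\mathcal C$ has basic open sets $\{g\mid g(c)=f(c)\ \forall c\in F\}$, $F\subseteq\mathcal C$ finite. *)

theory Defs
  imports "HOL-Algebra.Module"
begin

text \<open>An R-bimodule: additive abelian group, left action (the field smult of the library
  module record) and right action rmult.\<close>
record ('r, 'c) bimod = "('r, 'c) module" +
  rmult :: "'c \<Rightarrow> 'r \<Rightarrow> 'c"

record ('s, 'm) rmodule = "'m ring" +
  ract :: "'m \<Rightarrow> 's \<Rightarrow> 'm"

definition lsum :: "('a, 'b) ring_scheme \<Rightarrow> 'a list \<Rightarrow> 'a" where
  "lsum M xs = foldr (\<lambda>x acc. x \<oplus>\<^bsub>M\<^esub> acc) xs \<zero>\<^bsub>M\<^esub>"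

definition bimodule :: "'r ring \<Rightarrow> ('r, 'c) bimod \<Rightarrow> bool" where
  "bimodule R C \<longleftrightarrow> ring R \<and> abelian_group C \<and>
    (\<forall>r\<in>carrier R. \<forall>c\<in>carrier C. r \<odot>\<^bsub>C\<^esub> c \<in> carrier C \<and> rmult C c r \<in> carrier C) \<and>
    (\<forall>r\<in>carrier R. \<forall>s\<in>carrier R. \<forall>c\<in>carrier C.
        (r \<otimes>\<^bsub>R\<^esub> s) \<odot>\<^bsub>C\<^esub> c = r \<odot>\<^bsub>C\<^esub> (s \<odot>\<^bsub>C\<^esub> c) \<and>
        (r \<oplus>\<^bsub>R\<^esub> s) \<odot>\<^bsub>C\<^esub> c = (r \<odot>\<^bsub>C\<^esub> c) \<oplus>\<^bsub>C\<^esub> (s \<odot>\<^bsub>C\<^esub> c) \<and>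
        rmult C c (r \<otimes>\<^bsub>R\<^esub> s) = rmult C (rmult C c r) s \<and>
        rmult C c (r \<oplus>\<^bsub>R\<^esub> s) = rmult C c r \<oplus>\<^bsub>C\<^esub> rmult C c s \<and>
        rmult C (r \<odot>\<^bsub>C\<^esub> c) s = r \<odot>\<^bsub>C\<^esub> (rmult C c s)) \<and>
    (\<forall>r\<in>carrier R. \<forall>c\<in>carrier C. \<forall>d\<in>carrier C.
        r \<odot>\<^bsub>C\<^esub> (c \<oplus>\<^bsub>C\<^esub> d) = (r \<odot>\<^bsub>C\<^esub> c) \<oplus>\<^bsub>C\<^esub> (r \<odot>\<^bsub>C\<^esub> d) \<and>
        rmult C (c \<oplus>\<^bsub>C\<^esub> d) r = rmult C c r \<oplus>\<^bsub>C\<^esub> rmult C d r) \<and>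
    (\<forall>c\<in>carrier C. \<one>\<^bsub>R\<^esub> \<odot>\<^bsub>C\<^esub> c = c \<and> rmult C c \<one>\<^bsub>R\<^esub> = c)"

definition right_module :: "('s, 'a) ring_scheme \<Rightarrow> ('s, 'm) rmodule \<Rightarrow> bool" where
  "right_module S M \<longleftrightarrow> ring S \<and> abelian_group M \<and>
    (\<forall>m\<in>carrier M. \<forall>s\<in>carrier S. ract M m s \<in> carrier M) \<and>
    (\<forall>m\<in>carrier M. \<forall>s\<in>carrier S. \<forall>t\<in>carrier S.
        ract M m (s \<otimes>\<^bsub>S\<^esub> t) = ract M (ract M m s) t \<and>
        ract M m (s \<oplus>\<^bsub>S\<^esub> t) = ract M m s \<oplus>\<^bsub>M\<^esub> ract M m t) \<and>
    (\<forall>m\<in>carrier M. \<forall>n\<in>carrier M. \<forall>s\<in>carrier S.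
        ract M (m \<oplus>\<^bsub>M\<^esub> n) s = ract M m s \<oplus>\<^bsub>M\<^esub> ract M n s) \<and>
    (\<forall>m\<in>carrier M. ract M m \<one>\<^bsub>S\<^esub> = m)"

definition rmod_hom :: "('s, 'a) ring_scheme \<Rightarrow> ('s, 'm) rmodule \<Rightarrow> ('s, 'n) rmodule
    \<Rightarrow> ('m \<Rightarrow> 'n) \<Rightarrow> bool" where
  "rmod_hom S M N h \<longleftrightarrow> h \<in> carrier M \<rightarrow> carrier N \<and>
    (\<forall>x\<in>carrier M. \<forall>y\<in>carrier M. h (x \<oplus>\<^bsub>M\<^esub> y) = h x \<oplus>\<^bsub>N\<^esub> h y) \<and>
    (\<forall>x\<in>carrier M. \<forall>s\<in>carrier S. h (ract M x s) = ract N (h x) s)"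

text \<open>Elements of a tensor product are represented by finite lists of simple tensors
  (formal sums); two lists represent the same element iff they are related by the
  congruence (w.r.t. concatenation, which is the addition) generated by the defining
  relations of the tensor product.\<close>

inductive lcong :: "'a set \<Rightarrow> ('a list \<times> 'a list) set \<Rightarrow> 'a list \<Rightarrow> 'a list \<Rightarrow> bool"
  for S G where
  lc_refl: "set xs \<subseteq> S \<Longrightarrow> lcong S G xs xs"
| lc_gen: "(xs, ys) \<in> G \<Longrightarrow> lcong S G xs ys"
| lc_sym: "lcong S G xs ys \<Longrightarrow> lcong S G ys xs"
| lc_trans: "lcong S G xs ys \<Longrightarrow> lcong S G ys zs \<Longrightarrow> lcong S G xs zs"
| lc_app: "lcong S G xs xs' \<Longrightarrow> lcong S G ys ys' \<Longrightarrow> lcong S G (xs @ ys) (xs' @ ys')"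
| lc_comm: "set xs \<subseteq> S \<Longrightarrow> set ys \<subseteq> S \<Longrightarrow> lcong S G (xs @ ys) (ys @ xs)"

definition tens2_rel :: "'r ring \<Rightarrow> ('r, 'c) bimod \<Rightarrow> (('c \<times> 'c) list \<times> ('c \<times> 'c) list) set" where
  "tens2_rel R C =
     {([(a \<oplus>\<^bsub>C\<^esub> a', b)], [(a, b), (a', b)]) | a a' b.
        a \<in> carrier C \<and> a' \<in> carrier C \<and> b \<in> carrier C}
   \<union> {([(a, b \<oplus>\<^bsub>C\<^esub> b')], [(a, b), (a, b')]) | a b b'.
        a \<in> carrier C \<and> b \<in> carrier C \<and> b' \<in> carrier C}
   \<union> {([(rmult C a r, b)], [(a, r \<odot>\<^bsub>C\<^esub> b)]) | a r b.
        a \<in> carrier C \<and> r \<in> carrier R \<and> b \<in> carrier C}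
   \<union> {([(\<zero>\<^bsub>C\<^esub>, b)], []) | b. b \<in> carrier C}
   \<union> {([(a, \<zero>\<^bsub>C\<^esub>)], []) | a. a \<in> carrier C}"

definition tens2_eq :: "'r ring \<Rightarrow> ('r, 'c) bimod \<Rightarrow> ('c \<times> 'c) list \<Rightarrow> ('c \<times> 'c) list \<Rightarrow> bool" where
  "tens2_eq R C = lcong (carrier C \<times> carrier C) (tens2_rel R C)"

definition tens3_rel :: "'r ring \<Rightarrow> ('r, 'c) bimod
    \<Rightarrow> (('c \<times> 'c \<times> 'c) list \<times> ('c \<times> 'c \<times> 'c) list) set" where
  "tens3_rel R C =
     {([(a \<oplus>\<^bsub>C\<^esub> a', b, d)], [(a, b, d), (a', b, d)]) | a a' b d.
        a \<in> carrier C \<and> a' \<in> carrier C \<and> b \<in> carrier C \<and> d \<in> carrier C}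
   \<union> {([(a, b \<oplus>\<^bsub>C\<^esub> b', d)], [(a, b, d), (a, b', d)]) | a b b' d.
        a \<in> carrier C \<and> b \<in> carrier C \<and> b' \<in> carrier C \<and> d \<in> carrier C}
   \<union> {([(a, b, d \<oplus>\<^bsub>C\<^esub> d')], [(a, b, d), (a, b, d')]) | a b d d'.
        a \<in> carrier C \<and> b \<in> carrier C \<and> d \<in> carrier C \<and> d' \<in> carrier C}
   \<union> {([(rmult C a r, b, d)], [(a, r \<odot>\<^bsub>C\<^esub> b, d)]) | a r b d.
        a \<in> carrier C \<and> r \<in> carrier R \<and> b \<in> carrier C \<and> d \<in> carrier C}
   \<union> {([(a, rmult C b r, d)], [(a, b, r \<odot>\<^bsub>C\<^esub> d)]) | a r b d.
        a \<in> carrier C \<and> r \<in> carrier R \<and> b \<in> carrier C \<and> d \<in> carrier C}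
   \<union> {([(\<zero>\<^bsub>C\<^esub>, b, d)], []) | b d. b \<in> carrier C \<and> d \<in> carrier C}
   \<union> {([(a, \<zero>\<^bsub>C\<^esub>, d)], []) | a d. a \<in> carrier C \<and> d \<in> carrier C}
   \<union> {([(a, b, \<zero>\<^bsub>C\<^esub>)], []) | a b. a \<in> carrier C \<and> b \<in> carrier C}"

definition tens3_eq :: "'r ring \<Rightarrow> ('r, 'c) bimod
    \<Rightarrow> ('c \<times> 'c \<times> 'c) list \<Rightarrow> ('c \<times> 'c \<times> 'c) list \<Rightarrow> bool" where
  "tens3_eq R C = lcong (carrier C \<times> carrier C \<times> carrier C) (tens3_rel R C)"

text \<open>\<Delta> c is a list representing \<Delta>(c) = c_(1) \<otimes> c_(2) in C \<otimes>_R C.\<close>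
definition coring :: "'r ring \<Rightarrow> ('r, 'c) bimod \<Rightarrow> ('c \<Rightarrow> ('c \<times> 'c) list) \<Rightarrow> ('c \<Rightarrow> 'r) \<Rightarrow> bool" where
  "coring R C \<Delta> \<epsilon> \<longleftrightarrow> bimodule R C \<and>
    (\<forall>c\<in>carrier C. set (\<Delta> c) \<subseteq> carrier C \<times> carrier C \<and> \<epsilon> c \<in> carrier R) \<and>
    (\<forall>c\<in>carrier C. \<forall>d\<in>carrier C.
        tens2_eq R C (\<Delta> (c \<oplus>\<^bsub>C\<^esub> d)) (\<Delta> c @ \<Delta> d) \<and>
        \<epsilon> (c \<oplus>\<^bsub>C\<^esub> d) = \<epsilon> c \<oplus>\<^bsub>R\<^esub> \<epsilon> d) \<and>
    (\<forall>r\<in>carrier R. \<forall>c\<in>carrier C.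
        tens2_eq R C (\<Delta> (r \<odot>\<^bsub>C\<^esub> c)) (map (\<lambda>(a, b). (r \<odot>\<^bsub>C\<^esub> a, b)) (\<Delta> c)) \<and>
        tens2_eq R C (\<Delta> (rmult C c r)) (map (\<lambda>(a, b). (a, rmult C b r)) (\<Delta> c)) \<and>
        \<epsilon> (r \<odot>\<^bsub>C\<^esub> c) = r \<otimes>\<^bsub>R\<^esub> \<epsilon> c \<and>
        \<epsilon> (rmult C c r) = \<epsilon> c \<otimes>\<^bsub>R\<^esub> r) \<and>
    (\<forall>c\<in>carrier C.
        tens3_eq R C (concat (map (\<lambda>(a, b). map (\<lambda>(x, y). (x, y, b)) (\<Delta> a)) (\<Delta> c)))
                     (concat (map (\<lambda>(a, b). map (\<lambda>(x, y). (a, x, y)) (\<Delta> b)) (\<Delta> c)))) \<and>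
    (\<forall>c\<in>carrier C.
        lsum C (map (\<lambda>(a, b). \<epsilon> a \<odot>\<^bsub>C\<^esub> b) (\<Delta> c)) = c \<and>
        lsum C (map (\<lambda>(a, b). rmult C a (\<epsilon> b)) (\<Delta> c)) = c)"

text \<open>The left dual *C = _R Hom(C, R) (functions taken extensional on carrier C).\<close>
definition ldual :: "'r ring \<Rightarrow> ('r, 'c) bimod \<Rightarrow> ('c \<Rightarrow> 'r) set" where
  "ldual R C = {f. f \<in> extensional (carrier C) \<and> (\<forall>c\<in>carrier C. f c \<in> carrier R) \<and>
     (\<forall>c\<in>carrier C. \<forall>d\<in>carrier C. f (c \<oplus>\<^bsub>C\<^esub> d) = f c \<oplus>\<^bsub>R\<^esub> f d) \<and>
     (\<forall>r\<in>carrier R. \<forall>c\<in>carrier C. f (r \<odot>\<^bsub>C\<^esub> c) = r \<otimes>\<^bsub>R\<^esub> f c)}"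

text \<open>(f # g)(c) = g(c_(1) f(c_(2))).\<close>
definition dual_mult :: "'r ring \<Rightarrow> ('r, 'c) bimod \<Rightarrow> ('c \<Rightarrow> ('c \<times> 'c) list)
    \<Rightarrow> ('c \<Rightarrow> 'r) \<Rightarrow> ('c \<Rightarrow> 'r) \<Rightarrow> ('c \<Rightarrow> 'r)" where
  "dual_mult R C \<Delta> f g = (\<lambda>c\<in>carrier C. g (lsum C (map (\<lambda>(a, b). rmult C a (f b)) (\<Delta> c))))"

definition dual_ring :: "'r ring \<Rightarrow> ('r, 'c) bimod \<Rightarrow> ('c \<Rightarrow> ('c \<times> 'c) list) \<Rightarrow> ('c \<Rightarrow> 'r)
    \<Rightarrow> ('c \<Rightarrow> 'r) ring" where
  "dual_ring R C \<Delta> \<epsilon> = \<lparr>carrier = ldual R C,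
     mult = dual_mult R C \<Delta>,
     one = (\<lambda>c\<in>carrier C. \<epsilon> c),
     zero = (\<lambda>c\<in>carrier C. \<zero>\<^bsub>R\<^esub>),
     add = (\<lambda>f g. \<lambda>c\<in>carrier C. f c \<oplus>\<^bsub>R\<^esub> g c)\<rparr>"

definition dual_rmod :: "'r ring \<Rightarrow> ('r, 'c) bimod \<Rightarrow> ('c \<Rightarrow> ('c \<times> 'c) list) \<Rightarrow> ('c \<Rightarrow> 'r)
    \<Rightarrow> ('c \<Rightarrow> 'r, 'c \<Rightarrow> 'r) rmodule" where
  "dual_rmod R C \<Delta> \<epsilon> = \<lparr>carrier = ldual R C,
     mult = dual_mult R C \<Delta>,
     one = (\<lambda>c\<in>carrier C. \<epsilon> c),
     zero = (\<lambda>c\<in>carrier C. \<zero>\<^bsub>R\<^esub>),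
     add = (\<lambda>f g. \<lambda>c\<in>carrier C. f c \<oplus>\<^bsub>R\<^esub> g c),
     ract = dual_mult R C \<Delta>\<rparr>"

text \<open>The ring map R \<rightarrow> *C, r \<mapsto> \<epsilon>(-) r, through which right *C-modules are right R-modules.\<close>
definition dual_unit :: "'r ring \<Rightarrow> ('r, 'c) bimod \<Rightarrow> ('c \<Rightarrow> 'r) \<Rightarrow> 'r \<Rightarrow> ('c \<Rightarrow> 'r)" where
  "dual_unit R C \<epsilon> r = (\<lambda>c\<in>carrier C. \<epsilon> c \<otimes>\<^bsub>R\<^esub> r)"

text \<open>Rat^C(M): elements m with some \<Sum> m_i \<otimes> c_i such that m\<cdot>f = \<Sum> m_i f(c_i) for all f.\<close>
definition Rat :: "'r ring \<Rightarrow> ('r, 'c) bimod \<Rightarrow> ('c \<Rightarrow> ('c \<times> 'c) list) \<Rightarrow> ('c \<Rightarrow> 'r)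
    \<Rightarrow> ('c \<Rightarrow> 'r, 'm) rmodule \<Rightarrow> 'm set" where
  "Rat R C \<Delta> \<epsilon> M = {m \<in> carrier M. \<exists>xs. set xs \<subseteq> carrier M \<times> carrier C \<and>
     (\<forall>f\<in>ldual R C. ract M m f =
        lsum M (map (\<lambda>(n, c). ract M n (dual_unit R C \<epsilon> (f c))) xs))}"

text \<open>Locally projective left R-module (left \<alpha>-condition), via the finite dual basis
  characterisation: every finite subset F admits f_j \<in> *C, x_j \<in> C with
  c = \<Sum> f_j(c) x_j for all c \<in> F.\<close>
definition left_alpha :: "'r ring \<Rightarrow> ('r, 'c) bimod \<Rightarrow> bool" where
  "left_alpha R C \<longleftrightarrow> (\<forall>F. finite F \<and> F \<subseteq> carrier C \<longrightarrow>
     (\<exists>ps. set ps \<subseteq> ldual R C \<times> carrier C \<and>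
        (\<forall>c\<in>F. c = lsum C (map (\<lambda>(f, x). f c \<odot>\<^bsub>C\<^esub> x) ps))))"

definition left_submodule :: "'r ring \<Rightarrow> ('r, 'c) bimod \<Rightarrow> 'c set \<Rightarrow> bool" where
  "left_submodule R C D \<longleftrightarrow> D \<subseteq> carrier C \<and> \<zero>\<^bsub>C\<^esub> \<in> D \<and>
     (\<forall>c\<in>D. \<forall>d\<in>D. c \<oplus>\<^bsub>C\<^esub> d \<in> D) \<and> (\<forall>r\<in>carrier R. \<forall>c\<in>D. r \<odot>\<^bsub>C\<^esub> c \<in> D)"

text \<open>D is a left C-subcomodule of C (with coaction \<Delta>): \<Delta>(D) \<subseteq> C \<otimes>_R D.\<close>
definition left_subcomodule :: "'r ring \<Rightarrow> ('r, 'c) bimod \<Rightarrow> ('c \<Rightarrow> ('c \<times> 'c) list) \<Rightarrow> 'c set \<Rightarrow> bool" where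
  "left_subcomodule R C \<Delta> D \<longleftrightarrow> left_submodule R C D \<and>
     (\<forall>c\<in>D. \<exists>xs. set xs \<subseteq> carrier C \<times> D \<and> tens2_eq R C (\<Delta> c) xs)"

definition fin_gen_left :: "'r ring \<Rightarrow> ('r, 'c) bimod \<Rightarrow> 'c set \<Rightarrow> bool" where
  "fin_gen_left R C D \<longleftrightarrow> (\<exists>gs. set gs \<subseteq> D \<and>
     (\<forall>c\<in>D. \<exists>rs. length rs = length gs \<and> set rs \<subseteq> carrier R \<and>
        c = lsum C (map2 (\<lambda>r g. r \<odot>\<^bsub>C\<^esub> g) rs gs)))"

definition internal_direct_sum :: "('r, 'c) bimod \<Rightarrow> 'i set \<Rightarrow> ('i \<Rightarrow> 'c set) \<Rightarrow> bool" where
  "internal_direct_sum C I D \<longleftrightarrow>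
     (\<forall>c\<in>carrier C. \<exists>J x. finite J \<and> J \<subseteq> I \<and> (\<forall>i\<in>J. x i \<in> D i) \<and> c = finsum C x J) \<and>
     (\<forall>J x. finite J \<and> J \<subseteq> I \<and> (\<forall>i\<in>J. x i \<in> D i) \<and> finsum C x J = \<zero>\<^bsub>C\<^esub>
        \<longrightarrow> (\<forall>i\<in>J. x i = \<zero>\<^bsub>C\<^esub>))"

definition fin_nbhd :: "'r ring \<Rightarrow> ('r, 'c) bimod \<Rightarrow> ('c \<Rightarrow> 'r) \<Rightarrow> 'c set \<Rightarrow> ('c \<Rightarrow> 'r) set" where
  "fin_nbhd R C f F = {g \<in> ldual R C. \<forall>c\<in>F. g c = f c}"

definition dense_finite_top :: "'r ring \<Rightarrow> ('r, 'c) bimod \<Rightarrow> ('c \<Rightarrow> 'r) set \<Rightarrow> bool" where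
  "dense_finite_top R C X \<longleftrightarrow> (\<forall>f\<in>ldual R C. \<forall>F. finite F \<and> F \<subseteq> carrier C \<longrightarrow>
     fin_nbhd R C f F \<inter> X \<noteq> {})"

end

theory Submission
  imports Defs
begin


lemma lsum_Nil[simp]: "lsum M [] = \<zero>\<^bsub>M\<^esub>" by (simp add: lsum_def)
lemma lsum_Cons[simp]: "lsum M (x # xs) = x \<oplus>\<^bsub>M\<^esub> lsum M xs" by (simp add: lsum_def)

lemma (in abelian_monoid) lsum_closed[simp]: "set xs \<subseteq> carrier G \<Longrightarrow> lsum G xs \<in> carrier G"
  by (induct xs) auto

lemma (in abelian_monoid) lsum_append:
  "set xs \<subseteq> carrier G \<Longrightarrow> set ys \<subseteq> carrier G \<Longrightarrow> lsum G (xs @ ys) = lsum G xs \<oplus> lsum G ys"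
  by (induct xs) (auto simp: a_assoc)

lemma lsum_hom:
  assumes G: "abelian_monoid G" and H: "abelian_monoid H"
    and h0: "h \<zero>\<^bsub>G\<^esub> = \<zero>\<^bsub>H\<^esub>"
    and ha: "\<And>x y. x \<in> carrier G \<Longrightarrow> y \<in> carrier G \<Longrightarrow> h (x \<oplus>\<^bsub>G\<^esub> y) = h x \<oplus>\<^bsub>H\<^esub> h y"
    and xs: "set xs \<subseteq> carrier G"
  shows "h (lsum G xs) = lsum H (map h xs)"
  using xs by (induct xs) (auto simp: h0 ha abelian_monoid.lsum_closed[OF G])

lemma lsum_cong_map:
  "(\<And>x. x \<in> set xs \<Longrightarrow> f x = g x) \<Longrightarrow> lsum M (map f xs) = lsum M (map g xs)"
  by (metis map_eq_conv)

lemma (in abelian_monoid) lsum_map_append: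
  "(\<And>x. x \<in> S \<Longrightarrow> t x \<in> carrier G) \<Longrightarrow> set xs \<subseteq> S \<Longrightarrow> set ys \<subseteq> S \<Longrightarrow>
   lsum G (map t xs @ map t ys) = lsum G (map t xs) \<oplus> lsum G (map t ys)"
  by (rule lsum_append) auto

lemma (in abelian_monoid) lcong_lsum:
  assumes "lcong S Rel xs ys"
    and gen: "\<And>a b. (a, b) \<in> Rel \<Longrightarrow> set a \<subseteq> S \<and> set b \<subseteq> S \<and> lsum G (map t a) = lsum G (map t b)"
    and t: "\<And>x. x \<in> S \<Longrightarrow> t x \<in> carrier G"
  shows "set xs \<subseteq> S \<and> set ys \<subseteq> S \<and> lsum G (map t xs) = lsum G (map t ys)"
  using assms(1)
proof (induct rule: lcong.induct)
  case (lc_app xs xs' ys ys')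
  then show ?case
    using t by (simp add: lsum_map_append[of S])
next
  case (lc_comm xs ys)
  then show ?case using t
    by (simp add: lsum_map_append[of S]) (rule a_comm; rule lsum_closed; auto)
qed (use gen in auto)




lemma (in abelian_group) idem_zero: "x \<in> carrier G \<Longrightarrow> x \<oplus> x = x \<Longrightarrow> x = \<zero>"
  by (metis add.l_cancel_one' zero_closed)

locale cor =
  fixes R :: "'r ring" and C :: "('r, 'c) bimod"
    and \<Delta> :: "'c \<Rightarrow> ('c \<times> 'c) list" and \<epsilon> :: "'c \<Rightarrow> 'r"
  assumes cor: "coring R C \<Delta> \<epsilon>"
begin

lemma bim: "bimodule R C" using cor unfolding coring_def by blast

sublocale R: ring R using bim by (simp add: bimodule_def)
sublocale C: abelian_group C using bim by (simp add: bimodule_def)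

lemma sm_closed[simp]: "r \<in> carrier R \<Longrightarrow> c \<in> carrier C \<Longrightarrow> r \<odot>\<^bsub>C\<^esub> c \<in> carrier C"
  using bim by (simp add: bimodule_def)
lemma rm_closed[simp]: "r \<in> carrier R \<Longrightarrow> c \<in> carrier C \<Longrightarrow> rmult C c r \<in> carrier C"
  using bim by (simp add: bimodule_def)
lemma sm_assoc: "r \<in> carrier R \<Longrightarrow> s \<in> carrier R \<Longrightarrow> c \<in> carrier C \<Longrightarrow>
   (r \<otimes>\<^bsub>R\<^esub> s) \<odot>\<^bsub>C\<^esub> c = r \<odot>\<^bsub>C\<^esub> (s \<odot>\<^bsub>C\<^esub> c)"
  using bim by (simp add: bimodule_def)
lemma sm_ldistr: "r \<in> carrier R \<Longrightarrow> s \<in> carrier R \<Longrightarrow> c \<in> carrier C \<Longrightarrow>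
   (r \<oplus>\<^bsub>R\<^esub> s) \<odot>\<^bsub>C\<^esub> c = (r \<odot>\<^bsub>C\<^esub> c) \<oplus>\<^bsub>C\<^esub> (s \<odot>\<^bsub>C\<^esub> c)"
  using bim by (simp add: bimodule_def)
lemma rm_assoc: "r \<in> carrier R \<Longrightarrow> s \<in> carrier R \<Longrightarrow> c \<in> carrier C \<Longrightarrow>
   rmult C c (r \<otimes>\<^bsub>R\<^esub> s) = rmult C (rmult C c r) s"
  using bim by (simp add: bimodule_def)
lemma rm_ldistr: "r \<in> carrier R \<Longrightarrow> s \<in> carrier R \<Longrightarrow> c \<in> carrier C \<Longrightarrow>
   rmult C c (r \<oplus>\<^bsub>R\<^esub> s) = rmult C c r \<oplus>\<^bsub>C\<^esub> rmult C c s"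
  using bim by (simp add: bimodule_def)
lemma sm_rm: "r \<in> carrier R \<Longrightarrow> s \<in> carrier R \<Longrightarrow> c \<in> carrier C \<Longrightarrow>
   rmult C (r \<odot>\<^bsub>C\<^esub> c) s = r \<odot>\<^bsub>C\<^esub> (rmult C c s)"
  using bim by (simp add: bimodule_def)
lemma sm_rdistr: "r \<in> carrier R \<Longrightarrow> c \<in> carrier C \<Longrightarrow> d \<in> carrier C \<Longrightarrow>
   r \<odot>\<^bsub>C\<^esub> (c \<oplus>\<^bsub>C\<^esub> d) = (r \<odot>\<^bsub>C\<^esub> c) \<oplus>\<^bsub>C\<^esub> (r \<odot>\<^bsub>C\<^esub> d)"
  using bim by (simp add: bimodule_def)
lemma rm_rdistr: "r \<in> carrier R \<Longrightarrow> c \<in> carrier C \<Longrightarrow> d \<in> carrier C \<Longrightarrow>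
   rmult C (c \<oplus>\<^bsub>C\<^esub> d) r = rmult C c r \<oplus>\<^bsub>C\<^esub> rmult C d r"
  using bim by (simp add: bimodule_def)
lemma sm_one[simp]: "c \<in> carrier C \<Longrightarrow> \<one>\<^bsub>R\<^esub> \<odot>\<^bsub>C\<^esub> c = c"
  using bim by (simp add: bimodule_def)
lemma rm_one[simp]: "c \<in> carrier C \<Longrightarrow> rmult C c \<one>\<^bsub>R\<^esub> = c"
  using bim by (simp add: bimodule_def)

lemma sm_zero_r[simp]: "c \<in> carrier C \<Longrightarrow> \<zero>\<^bsub>R\<^esub> \<odot>\<^bsub>C\<^esub> c = \<zero>\<^bsub>C\<^esub>"
  by (rule C.idem_zero) (auto simp: sm_ldistr[symmetric])
lemma sm_zero_c[simp]: "r \<in> carrier R \<Longrightarrow> r \<odot>\<^bsub>C\<^esub> \<zero>\<^bsub>C\<^esub> = \<zero>\<^bsub>C\<^esub>"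
  by (rule C.idem_zero) (auto simp: sm_rdistr[symmetric])
lemma rm_zero_r[simp]: "c \<in> carrier C \<Longrightarrow> rmult C c \<zero>\<^bsub>R\<^esub> = \<zero>\<^bsub>C\<^esub>"
  by (rule C.idem_zero) (auto simp: rm_ldistr[symmetric])
lemma rm_zero_c[simp]: "r \<in> carrier R \<Longrightarrow> rmult C \<zero>\<^bsub>C\<^esub> r = \<zero>\<^bsub>C\<^esub>"
  by (rule C.idem_zero) (auto simp: rm_rdistr[symmetric])

lemma sm_neg: "c \<in> carrier C \<Longrightarrow> \<ominus>\<^bsub>C\<^esub> c = (\<ominus>\<^bsub>R\<^esub> \<one>\<^bsub>R\<^esub>) \<odot>\<^bsub>C\<^esub> c"
proof -
  assume c: "c \<in> carrier C"
  have "(\<ominus>\<^bsub>R\<^esub> \<one>\<^bsub>R\<^esub>) \<odot>\<^bsub>C\<^esub> c \<oplus>\<^bsub>C\<^esub> c = \<zero>\<^bsub>C\<^esub>"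
    using c by (metis R.l_neg R.one_closed R.a_inv_closed sm_ldistr sm_one sm_zero_r)
  then show ?thesis using c by (metis C.add.inv_equality sm_closed R.one_closed R.a_inv_closed)
qed

lemma Delta_set: "c \<in> carrier C \<Longrightarrow> set (\<Delta> c) \<subseteq> carrier C \<times> carrier C"
  using cor unfolding coring_def by blast
lemma eps_closed[simp]: "c \<in> carrier C \<Longrightarrow> \<epsilon> c \<in> carrier R"
  using cor unfolding coring_def by blast
lemma Delta_add: "c \<in> carrier C \<Longrightarrow> d \<in> carrier C \<Longrightarrow> tens2_eq R C (\<Delta> (c \<oplus>\<^bsub>C\<^esub> d)) (\<Delta> c @ \<Delta> d)"
  using cor unfolding coring_def by blast
lemma eps_add: "c \<in> carrier C \<Longrightarrow> d \<in> carrier C \<Longrightarrow> \<epsilon> (c \<oplus>\<^bsub>C\<^esub> d) = \<epsilon> c \<oplus>\<^bsub>R\<^esub> \<epsilon> d"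
  using cor unfolding coring_def by blast
lemma Delta_sm: "r \<in> carrier R \<Longrightarrow> c \<in> carrier C \<Longrightarrow>
   tens2_eq R C (\<Delta> (r \<odot>\<^bsub>C\<^esub> c)) (map (\<lambda>(a, b). (r \<odot>\<^bsub>C\<^esub> a, b)) (\<Delta> c))"
  using cor unfolding coring_def by blast
lemma eps_sm: "r \<in> carrier R \<Longrightarrow> c \<in> carrier C \<Longrightarrow> \<epsilon> (r \<odot>\<^bsub>C\<^esub> c) = r \<otimes>\<^bsub>R\<^esub> \<epsilon> c"
  using cor unfolding coring_def by blast
lemma eps_rm: "r \<in> carrier R \<Longrightarrow> c \<in> carrier C \<Longrightarrow> \<epsilon> (rmult C c r) = \<epsilon> c \<otimes>\<^bsub>R\<^esub> r"
  using cor unfolding coring_def by blast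
lemma counit: "c \<in> carrier C \<Longrightarrow> lsum C (map (\<lambda>(a, b). \<epsilon> a \<odot>\<^bsub>C\<^esub> b) (\<Delta> c)) = c"
  using cor unfolding coring_def by blast
lemma eps_zero[simp]: "\<epsilon> \<zero>\<^bsub>C\<^esub> = \<zero>\<^bsub>R\<^esub>"
  by (rule R.idem_zero) (simp, metis eps_add C.zero_closed C.l_zero)

lemma ldual_closed[simp]: "f \<in> ldual R C \<Longrightarrow> c \<in> carrier C \<Longrightarrow> f c \<in> carrier R"
  unfolding ldual_def by blast
lemma ldual_add: "f \<in> ldual R C \<Longrightarrow> c \<in> carrier C \<Longrightarrow> d \<in> carrier C \<Longrightarrow> f (c \<oplus>\<^bsub>C\<^esub> d) = f c \<oplus>\<^bsub>R\<^esub> f d"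
  unfolding ldual_def by blast
lemma ldual_sm: "f \<in> ldual R C \<Longrightarrow> r \<in> carrier R \<Longrightarrow> c \<in> carrier C \<Longrightarrow> f (r \<odot>\<^bsub>C\<^esub> c) = r \<otimes>\<^bsub>R\<^esub> f c"
  unfolding ldual_def by blast
lemma ldual_ext: "f \<in> ldual R C \<Longrightarrow> c \<notin> carrier C \<Longrightarrow> f c = undefined"
  unfolding ldual_def extensional_def by blast
lemma ldual_zero[simp]: "f \<in> ldual R C \<Longrightarrow> f \<zero>\<^bsub>C\<^esub> = \<zero>\<^bsub>R\<^esub>"
  by (rule R.idem_zero) (simp, metis ldual_add C.zero_closed C.l_zero)
lemma ldualI:
  assumes "f \<in> extensional (carrier C)" "\<And>c. c \<in> carrier C \<Longrightarrow> f c \<in> carrier R"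
    "\<And>c d. c \<in> carrier C \<Longrightarrow> d \<in> carrier C \<Longrightarrow> f (c \<oplus>\<^bsub>C\<^esub> d) = f c \<oplus>\<^bsub>R\<^esub> f d"
    "\<And>r c. r \<in> carrier R \<Longrightarrow> c \<in> carrier C \<Longrightarrow> f (r \<odot>\<^bsub>C\<^esub> c) = r \<otimes>\<^bsub>R\<^esub> f c"
  shows "f \<in> ldual R C"
  using assms unfolding ldual_def by blast

definition T :: "('c \<Rightarrow> 'r) \<Rightarrow> ('c \<times> 'c) list \<Rightarrow> 'c" where
  "T g xs = lsum C (map (\<lambda>(a, b). rmult C a (g b)) xs)"

lemma T_closed[simp]: "g \<in> ldual R C \<Longrightarrow> set xs \<subseteq> carrier C \<times> carrier C \<Longrightarrow> T g xs \<in> carrier C"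
  unfolding T_def by (rule C.lsum_closed) auto

lemma T_resp:
  assumes g: "g \<in> ldual R C" and eq: "tens2_eq R C xs ys"
  shows "T g xs = T g ys"
proof -
  have "set xs \<subseteq> carrier C \<times> carrier C \<and> set ys \<subseteq> carrier C \<times> carrier C \<and>
     lsum C (map (\<lambda>(a, b). rmult C a (g b)) xs) = lsum C (map (\<lambda>(a, b). rmult C a (g b)) ys)"
  proof (rule C.lcong_lsum)
    show "lcong (carrier C \<times> carrier C) (tens2_rel R C) xs ys" using eq by (simp add: tens2_eq_def)
  next
    fix x assume "x \<in> carrier C \<times> carrier C" then show "(case x of (a, b) \<Rightarrow> rmult C a (g b)) \<in> carrier C"
      using g by auto
  next
    fix a b assume "(a, b) \<in> tens2_rel R C"
    then show "set a \<subseteq> carrier C \<times> carrier C \<and> set b \<subseteq> carrier C \<times> carrier C \<and>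
      lsum C (map (\<lambda>(a, b). rmult C a (g b)) a) = lsum C (map (\<lambda>(a, b). rmult C a (g b)) b)"
      unfolding tens2_rel_def using g
      apply (elim UnE CollectE exE conjE)
      apply (simp_all add: rm_rdistr ldual_add ldual_sm rm_ldistr rm_assoc)
      done
  qed
  then show ?thesis by (simp add: T_def)
qed

lemma T_append: "g \<in> ldual R C \<Longrightarrow> set xs \<subseteq> carrier C \<times> carrier C \<Longrightarrow> set ys \<subseteq> carrier C \<times> carrier C \<Longrightarrow>
   T g (xs @ ys) = T g xs \<oplus>\<^bsub>C\<^esub> T g ys"
  unfolding T_def map_append by (rule C.lsum_map_append[where S="carrier C \<times> carrier C"]) auto

definition Psi :: "('c \<Rightarrow> 'r) \<Rightarrow> 'c \<Rightarrow> 'c" where "Psi g c = T g (\<Delta> c)"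

lemma Psi_closed[simp]: "g \<in> ldual R C \<Longrightarrow> c \<in> carrier C \<Longrightarrow> Psi g c \<in> carrier C"
  by (simp add: Psi_def Delta_set)

lemma Psi_add: "g \<in> ldual R C \<Longrightarrow> c \<in> carrier C \<Longrightarrow> d \<in> carrier C \<Longrightarrow>
   Psi g (c \<oplus>\<^bsub>C\<^esub> d) = Psi g c \<oplus>\<^bsub>C\<^esub> Psi g d"
  unfolding Psi_def by (simp add: T_resp[OF _ Delta_add] T_append Delta_set)

lemma Psi_zero[simp]: "g \<in> ldual R C \<Longrightarrow> Psi g \<zero>\<^bsub>C\<^esub> = \<zero>\<^bsub>C\<^esub>"
  by (rule C.idem_zero) (auto simp: Psi_add[symmetric])

lemma Psi_sm: "g \<in> ldual R C \<Longrightarrow> r \<in> carrier R \<Longrightarrow> c \<in> carrier C \<Longrightarrow>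
   Psi g (r \<odot>\<^bsub>C\<^esub> c) = r \<odot>\<^bsub>C\<^esub> Psi g c"
proof -
  assume g: "g \<in> ldual R C" and r: "r \<in> carrier R" and c: "c \<in> carrier C"
  have "Psi g (r \<odot>\<^bsub>C\<^esub> c) = T g (map (\<lambda>(a, b). (r \<odot>\<^bsub>C\<^esub> a, b)) (\<Delta> c))"
    unfolding Psi_def using T_resp[OF g Delta_sm[OF r c]] .
  also have "\<dots> = lsum C (map (\<lambda>x. r \<odot>\<^bsub>C\<^esub> x) (map (\<lambda>(a, b). rmult C a (g b)) (\<Delta> c)))"
    unfolding T_def using Delta_set[OF c] g r
    by (auto simp: comp_def sm_rm intro!: lsum_cong_map)
  also have "\<dots> = r \<odot>\<^bsub>C\<^esub> lsum C (map (\<lambda>(a, b). rmult C a (g b)) (\<Delta> c))"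
    by (rule lsum_hom[symmetric]) (use Delta_set[OF c] g r in \<open>auto simp: sm_rdistr C.abelian_monoid_axioms\<close>)
  finally show ?thesis by (simp add: Psi_def T_def)
qed

lemma dual_mult_eval: "c \<in> carrier C \<Longrightarrow> dual_mult R C \<Delta> n h c = h (Psi n c)"
  by (simp add: dual_mult_def Psi_def T_def)

lemma eps_lsum: "set xs \<subseteq> carrier C \<Longrightarrow> \<epsilon> (lsum C xs) = lsum R (map \<epsilon> xs)"
  by (rule lsum_hom) (auto simp: eps_add C.abelian_monoid_axioms R.abelian_monoid_axioms)

lemma ldual_lsum: "f \<in> ldual R C \<Longrightarrow> set xs \<subseteq> carrier C \<Longrightarrow> f (lsum C xs) = lsum R (map f xs)"
  by (rule lsum_hom) (auto simp: ldual_add C.abelian_monoid_axioms R.abelian_monoid_axioms)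

lemma eps_Psi: "n \<in> ldual R C \<Longrightarrow> c \<in> carrier C \<Longrightarrow> \<epsilon> (Psi n c) = n c"
proof -
  assume n: "n \<in> ldual R C" and c: "c \<in> carrier C"
  have "\<epsilon> (Psi n c) = lsum R (map \<epsilon> (map (\<lambda>(a, b). rmult C a (n b)) (\<Delta> c)))"
    unfolding Psi_def T_def by (rule eps_lsum) (use Delta_set[OF c] n in auto)
  also have "\<dots> = lsum R (map n (map (\<lambda>(a, b). \<epsilon> a \<odot>\<^bsub>C\<^esub> b) (\<Delta> c)))"
    using Delta_set[OF c] n by (auto simp: eps_rm ldual_sm intro!: lsum_cong_map)
  also have "\<dots> = n (lsum C (map (\<lambda>(a, b). \<epsilon> a \<odot>\<^bsub>C\<^esub> b) (\<Delta> c)))"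
    by (rule ldual_lsum[symmetric]) (use Delta_set[OF c] n in auto)
  finally show ?thesis by (simp add: counit c)
qed

lemma dual_unit_ldual: "r \<in> carrier R \<Longrightarrow> dual_unit R C \<epsilon> r \<in> ldual R C"
  by (rule ldualI) (auto simp: dual_unit_def eps_add eps_sm R.l_distr R.m_assoc)

lemma one_ldual: "(\<lambda>c\<in>carrier C. \<epsilon> c) \<in> ldual R C"
  by (rule ldualI) (auto simp: eps_add eps_sm)

lemma dual_mult_unit: "n \<in> ldual R C \<Longrightarrow> r \<in> carrier R \<Longrightarrow> c \<in> carrier C \<Longrightarrow>
   dual_mult R C \<Delta> n (dual_unit R C \<epsilon> r) c = n c \<otimes>\<^bsub>R\<^esub> r"
  by (simp add: dual_mult_eval dual_unit_def eps_Psi)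

end



lemma rm_parts:
  assumes "right_module S M"
  shows "ring S" "abelian_group M"
    "\<And>m s. m \<in> carrier M \<Longrightarrow> s \<in> carrier S \<Longrightarrow> ract M m s \<in> carrier M"
    "\<And>m s t. m \<in> carrier M \<Longrightarrow> s \<in> carrier S \<Longrightarrow> t \<in> carrier S \<Longrightarrow>
        ract M m (s \<otimes>\<^bsub>S\<^esub> t) = ract M (ract M m s) t"
    "\<And>m s t. m \<in> carrier M \<Longrightarrow> s \<in> carrier S \<Longrightarrow> t \<in> carrier S \<Longrightarrow>
        ract M m (s \<oplus>\<^bsub>S\<^esub> t) = ract M m s \<oplus>\<^bsub>M\<^esub> ract M m t"
    "\<And>m. m \<in> carrier M \<Longrightarrow> ract M m \<one>\<^bsub>S\<^esub> = m"
  using assms unfolding right_module_def by blast+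

lemma rm_zero:
  assumes M: "right_module S M" and m: "m \<in> carrier M"
  shows "ract M m \<zero>\<^bsub>S\<^esub> = \<zero>\<^bsub>M\<^esub>"
proof -
  interpret S: ring S by (rule rm_parts(1)[OF M])
  interpret M: abelian_group M by (rule rm_parts(2)[OF M])
  show ?thesis
    by (rule M.idem_zero) (use rm_parts(3,5)[OF M] m in \<open>auto simp flip: rm_parts(5)[OF M]\<close>)
qed

lemma rm_lsum:
  assumes M: "right_module S M" and m: "m \<in> carrier M" and ss: "set ss \<subseteq> carrier S"
  shows "ract M m (lsum S ss) = lsum M (map (ract M m) ss)"
proof -
  interpret S: ring S by (rule rm_parts(1)[OF M])
  interpret M: abelian_group M by (rule rm_parts(2)[OF M])
  show ?thesis
    by (rule lsum_hom) (use ss rm_parts(5)[OF M] rm_zero[OF M m] m in \<open>auto simp: S.abelian_monoid_axioms M.abelian_monoid_axioms\<close>)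
qed

lemma hom_lsum:
  assumes M: "right_module S M" and N: "right_module S N" and h: "rmod_hom S M N f"
    and xs: "set xs \<subseteq> carrier M"
  shows "f (lsum M xs) = lsum N (map f xs)"
proof -
  interpret M: abelian_group M by (rule rm_parts(2)[OF M])
  interpret N: abelian_group N by (rule rm_parts(2)[OF N])
  have f: "f \<in> carrier M \<rightarrow> carrier N" "\<And>x y. x \<in> carrier M \<Longrightarrow> y \<in> carrier M \<Longrightarrow> f (x \<oplus>\<^bsub>M\<^esub> y) = f x \<oplus>\<^bsub>N\<^esub> f y"
    using h unfolding rmod_hom_def by blast+
  have "f \<zero>\<^bsub>M\<^esub> = \<zero>\<^bsub>N\<^esub>"
    by (rule N.idem_zero) (use f in \<open>auto simp flip: f(2)\<close>)
  then show ?thesis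
    by (rule lsum_hom[OF M.abelian_monoid_axioms N.abelian_monoid_axioms]) (use f xs in auto)
qed

lemma hom_ract: "rmod_hom S M N f \<Longrightarrow> x \<in> carrier M \<Longrightarrow> s \<in> carrier S \<Longrightarrow> f (ract M x s) = ract N (f x) s"
  unfolding rmod_hom_def by blast
lemma hom_closed: "rmod_hom S M N f \<Longrightarrow> x \<in> carrier M \<Longrightarrow> f x \<in> carrier N"
  unfolding rmod_hom_def by blast

context cor begin

abbreviation "S \<equiv> dual_ring R C \<Delta> \<epsilon>"

lemma S_carrier[simp]: "carrier S = ldual R C" by (simp add: dual_ring_def)
lemma S_mult[simp]: "mult S = dual_mult R C \<Delta>" by (simp add: dual_ring_def)
lemma S_one[simp]: "one S = (\<lambda>c\<in>carrier C. \<epsilon> c)" by (simp add: dual_ring_def)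
lemma lsum_rmod: "lsum (dual_rmod R C \<Delta> \<epsilon>) xs = lsum S xs"
  by (simp add: lsum_def dual_rmod_def dual_ring_def)
lemma rmod_carrier[simp]: "carrier (dual_rmod R C \<Delta> \<epsilon>) = ldual R C" by (simp add: dual_rmod_def)
lemma rmod_ract[simp]: "ract (dual_rmod R C \<Delta> \<epsilon>) = dual_mult R C \<Delta>" by (simp add: dual_rmod_def)

lemma RatD:
  assumes "x \<in> Rat R C \<Delta> \<epsilon> M"
  obtains xs where "x \<in> carrier M" "set xs \<subseteq> carrier M \<times> carrier C"
    "\<And>h. h \<in> ldual R C \<Longrightarrow> ract M x h = lsum M (map (\<lambda>(n, c). ract M n (dual_unit R C \<epsilon> (h c))) xs)"
  using assms unfolding Rat_def by blast

lemma RatI: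
  assumes "x \<in> carrier M" "set xs \<subseteq> carrier M \<times> carrier C"
    "\<And>h. h \<in> ldual R C \<Longrightarrow> ract M x h = lsum M (map (\<lambda>(n, c). ract M n (dual_unit R C \<epsilon> (h c))) xs)"
  shows "x \<in> Rat R C \<Delta> \<epsilon> M"
  using assms unfolding Rat_def by blast

lemma RatD_dual:
  assumes "x \<in> Rat R C \<Delta> \<epsilon> (dual_rmod R C \<Delta> \<epsilon>)"
  shows "\<exists>ys. set ys \<subseteq> ldual R C \<times> carrier C \<and>
    (\<forall>h\<in>ldual R C. dual_mult R C \<Delta> x h = lsum S (map (\<lambda>(n, c). dual_mult R C \<Delta> n (dual_unit R C \<epsilon> (h c))) ys))"
  using assms unfolding Rat_def rmod_carrier rmod_ract lsum_rmod by blast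

lemma exact_from_dense:
  assumes dense: "dense_finite_top R C (Rat R C \<Delta> \<epsilon> (dual_rmod R C \<Delta> \<epsilon>))"
    and L: "right_module S L" and M: "right_module S M" and N: "right_module S N"
    and f: "rmod_hom S L M f" and g: "rmod_hom S M N g"
    and ex: "f ` carrier L = {x \<in> carrier M. g x = \<zero>\<^bsub>N\<^esub>}"
  shows "f ` Rat R C \<Delta> \<epsilon> L = {x \<in> Rat R C \<Delta> \<epsilon> M. g x = \<zero>\<^bsub>N\<^esub>}"
proof
  interpret Sr: ring S by (rule rm_parts(1)[OF L])
  show "f ` Rat R C \<Delta> \<epsilon> L \<subseteq> {x \<in> Rat R C \<Delta> \<epsilon> M. g x = \<zero>\<^bsub>N\<^esub>}"
  proof
    fix y assume "y \<in> f ` Rat R C \<Delta> \<epsilon> L"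
    then obtain l where l: "l \<in> Rat R C \<Delta> \<epsilon> L" and y: "y = f l" by blast
    obtain xs where l1: "l \<in> carrier L" and xs: "set xs \<subseteq> carrier L \<times> carrier C"
      and lr: "\<And>h. h \<in> ldual R C \<Longrightarrow> ract L l h = lsum L (map (\<lambda>(n, c). ract L n (dual_unit R C \<epsilon> (h c))) xs)"
      using RatD[OF l] by blast
    have "y \<in> Rat R C \<Delta> \<epsilon> M"
    proof (rule RatI[where xs="map (\<lambda>(n, c). (f n, c)) xs"])
      show "y \<in> carrier M" using y hom_closed[OF f l1] by simp
      show "set (map (\<lambda>(n, c). (f n, c)) xs) \<subseteq> carrier M \<times> carrier C"
        using xs hom_closed[OF f] by auto
      fix h assume h: "h \<in> ldual R C"
      have "ract M y h = f (ract L l h)" using y hom_ract[OF f l1] h by simp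
      also have "\<dots> = f (lsum L (map (\<lambda>(n, c). ract L n (dual_unit R C \<epsilon> (h c))) xs))" using lr[OF h] by simp
      also have "\<dots> = lsum M (map f (map (\<lambda>(n, c). ract L n (dual_unit R C \<epsilon> (h c))) xs))"
        by (rule hom_lsum[OF L M f]) (use xs h rm_parts(3)[OF L] dual_unit_ldual in auto)
      also have "\<dots> = lsum M (map (\<lambda>(n, c). ract M n (dual_unit R C \<epsilon> (h c))) (map (\<lambda>(n, c). (f n, c)) xs))"
        unfolding map_map by (rule lsum_cong_map) (use xs h hom_ract[OF f] dual_unit_ldual in auto)
      finally show "ract M y h = lsum M (map (\<lambda>(n, c). ract M n (dual_unit R C \<epsilon> (h c))) (map (\<lambda>(n, c). (f n, c)) xs))" .
    qed
    moreover have "g y = \<zero>\<^bsub>N\<^esub>" using ex y l1 by blast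
    ultimately show "y \<in> {x \<in> Rat R C \<Delta> \<epsilon> M. g x = \<zero>\<^bsub>N\<^esub>}" by blast
  qed
next
  interpret Sr: ring S by (rule rm_parts(1)[OF L])
  show "{x \<in> Rat R C \<Delta> \<epsilon> M. g x = \<zero>\<^bsub>N\<^esub>} \<subseteq> f ` Rat R C \<Delta> \<epsilon> L"
  proof
    fix x assume "x \<in> {x \<in> Rat R C \<Delta> \<epsilon> M. g x = \<zero>\<^bsub>N\<^esub>}"
    then have xr: "x \<in> Rat R C \<Delta> \<epsilon> M" and gx: "g x = \<zero>\<^bsub>N\<^esub>" by auto
    obtain xs where x1: "x \<in> carrier M" and xs: "set xs \<subseteq> carrier M \<times> carrier C"
      and xrat: "\<And>h. h \<in> ldual R C \<Longrightarrow> ract M x h = lsum M (map (\<lambda>(n, c). ract M n (dual_unit R C \<epsilon> (h c))) xs)"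
      using RatD[OF xr] by blast
    obtain l where l1: "l \<in> carrier L" and fl: "f l = x" using ex x1 gx by (metis (mono_tags, lifting) image_iff mem_Collect_eq)
    have F: "finite (snd ` set xs)" "snd ` set xs \<subseteq> carrier C" using xs by auto
    obtain g0 where g0n: "g0 \<in> fin_nbhd R C (\<lambda>c\<in>carrier C. \<epsilon> c) (snd ` set xs)"
      and g0r: "g0 \<in> Rat R C \<Delta> \<epsilon> (dual_rmod R C \<Delta> \<epsilon>)"
      using dense one_ldual F unfolding dense_finite_top_def by blast
    have g0: "g0 \<in> ldual R C" using g0n unfolding fin_nbhd_def by auto
    have g0e: "g0 c = \<epsilon> c" if c: "c \<in> snd ` set xs" for c
    proof -
      have "g0 c = (\<lambda>c\<in>carrier C. \<epsilon> c) c" using g0n c unfolding fin_nbhd_def by blast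
      then show ?thesis using c F by auto
    qed
    obtain ys where ys: "set ys \<subseteq> ldual R C \<times> carrier C"
      and yrat: "\<And>h. h \<in> ldual R C \<Longrightarrow> dual_mult R C \<Delta> g0 h = lsum S (map (\<lambda>(n, c). dual_mult R C \<Delta> n (dual_unit R C \<epsilon> (h c))) ys)"
      using RatD_dual[OF g0r] by blast
    define l' where "l' = ract L l g0"
    have l'1: "l' \<in> carrier L" using rm_parts(3)[OF L l1] g0 by (simp add: l'_def)
    have "f l' = ract M x g0" using hom_ract[OF f l1] g0 fl by (simp add: l'_def)
    also have "\<dots> = lsum M (map (\<lambda>(n, c). ract M n (dual_unit R C \<epsilon> (g0 c))) xs)" using xrat[OF g0] .
    also have "\<dots> = lsum M (map (\<lambda>(n, c). ract M n (dual_unit R C \<epsilon> ((\<lambda>c\<in>carrier C. \<epsilon> c) c))) xs)"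
    proof (rule lsum_cong_map)
      fix p assume p: "p \<in> set xs"
      obtain n c where pnc: "p = (n, c)" by (cases p)
      have c: "c \<in> snd ` set xs" using p pnc by force
      have "g0 c = (\<lambda>c\<in>carrier C. \<epsilon> c) c" using g0e[OF c] c F(2) by auto
      then show "(\<lambda>(n, c). ract M n (dual_unit R C \<epsilon> (g0 c))) p = (\<lambda>(n, c). ract M n (dual_unit R C \<epsilon> ((\<lambda>c\<in>carrier C. \<epsilon> c) c))) p"
        using pnc by simp
    qed
    also have "\<dots> = ract M x (\<lambda>c\<in>carrier C. \<epsilon> c)" using xrat[OF one_ldual] by (rule sym)
    also have "\<dots> = x" using rm_parts(6)[OF M x1] by simp
    finally have fl': "f l' = x" .
    have "l' \<in> Rat R C \<Delta> \<epsilon> L"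
    proof (rule RatI[where xs="map (\<lambda>(n, c). (ract L l n, c)) ys"])
      show "l' \<in> carrier L" by (rule l'1)
      show "set (map (\<lambda>(n, c). (ract L l n, c)) ys) \<subseteq> carrier L \<times> carrier C"
        using ys rm_parts(3)[OF L l1] by auto
      fix h assume h: "h \<in> ldual R C"
      have "ract L l' h = ract L l (dual_mult R C \<Delta> g0 h)"
        using rm_parts(4)[OF L l1, of g0 h] g0 h by (simp add: l'_def)
      also have "\<dots> = ract L l (lsum S (map (\<lambda>(n, c). dual_mult R C \<Delta> n (dual_unit R C \<epsilon> (h c))) ys))"
        using yrat[OF h] by simp
      also have "\<dots> = lsum L (map (ract L l) (map (\<lambda>(n, c). dual_mult R C \<Delta> n (dual_unit R C \<epsilon> (h c))) ys))"
      proof (rule rm_lsum[OF L l1])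
        show "set (map (\<lambda>(n, c). dual_mult R C \<Delta> n (dual_unit R C \<epsilon> (h c))) ys) \<subseteq> carrier S"
        proof
          fix q assume "q \<in> set (map (\<lambda>(n, c). dual_mult R C \<Delta> n (dual_unit R C \<epsilon> (h c))) ys)"
          then obtain n c where nc: "(n, c) \<in> set ys" and q: "q = dual_mult R C \<Delta> n (dual_unit R C \<epsilon> (h c))" by auto
          have "n \<in> carrier S" "dual_unit R C \<epsilon> (h c) \<in> carrier S"
            using nc ys h dual_unit_ldual by auto
          then have "n \<otimes>\<^bsub>S\<^esub> dual_unit R C \<epsilon> (h c) \<in> carrier S" by (rule Sr.m_closed)
          then show "q \<in> carrier S" using q by simp
        qed
      qed
      also have "\<dots> = lsum L (map (\<lambda>(n, c). ract L n (dual_unit R C \<epsilon> (h c))) (map (\<lambda>(n, c). (ract L l n, c)) ys))"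
        unfolding map_map
      proof (rule lsum_cong_map)
        fix p assume p: "p \<in> set ys"
        obtain n c where pnc: "p = (n, c)" by (cases p)
        have "n \<in> carrier S" "dual_unit R C \<epsilon> (h c) \<in> carrier S"
          using p pnc ys h dual_unit_ldual by auto
        from rm_parts(4)[OF L l1 this] show "(ract L l \<circ> (\<lambda>(n, c). dual_mult R C \<Delta> n (dual_unit R C \<epsilon> (h c)))) p =
          ((\<lambda>(n, c). ract L n (dual_unit R C \<epsilon> (h c))) \<circ> (\<lambda>(n, c). (ract L l n, c))) p"
          using pnc by simp
      qed
      finally show "ract L l' h = lsum L (map (\<lambda>(n, c). ract L n (dual_unit R C \<epsilon> (h c))) (map (\<lambda>(n, c). (ract L l n, c)) ys))" .
    qed
    then show "x \<in> f ` Rat R C \<Delta> \<epsilon> L" using fl' by blast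
  qed
qed

end



lemma (in abelian_group) neg_zero: "\<ominus> \<zero> = \<zero>"
  by (rule minus_equality) simp_all

lemma (in abelian_group) finsum_neg:
  "x \<in> J \<rightarrow> carrier G \<Longrightarrow> finsum G (\<lambda>i. \<ominus> x i) J = \<ominus> finsum G x J"
proof (induct J rule: infinite_finite_induct)
  case (insert j J)
  then have "x \<in> J \<rightarrow> carrier G" "x j \<in> carrier G" by auto
  moreover have "(\<lambda>i. \<ominus> x i) \<in> J \<rightarrow> carrier G" using insert by auto
  ultimately show ?case using insert by (simp add: minus_add)
qed (simp_all add: neg_zero)

lemma (in abelian_group) minus_eq_zero: "a \<in> carrier G \<Longrightarrow> b \<in> carrier G \<Longrightarrow> a \<oplus> \<ominus> b = \<zero> \<Longrightarrow> a = b"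
  by (metis add.inv_closed minus_equality minus_minus a_comm)

locale dsum = cor R C \<Delta> \<epsilon>
  for R :: "'r ring" and C :: "('r, 'c) bimod" and \<Delta> :: "'c \<Rightarrow> ('c \<times> 'c) list" and \<epsilon> :: "'c \<Rightarrow> 'r" +
  fixes I :: "'i set" and D :: "'i \<Rightarrow> 'c set"
  assumes alpha: "left_alpha R C"
    and ids: "internal_direct_sum C I D"
    and subc: "\<forall>i\<in>I. left_subcomodule R C \<Delta> (D i)"
    and fg: "\<forall>i\<in>I. fin_gen_left R C (D i)"
begin

lemma D_sub: "i \<in> I \<Longrightarrow> D i \<subseteq> carrier C"
  using subc unfolding left_subcomodule_def left_submodule_def by blast
lemma D_zero: "i \<in> I \<Longrightarrow> \<zero>\<^bsub>C\<^esub> \<in> D i"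
  using subc unfolding left_subcomodule_def left_submodule_def by blast
lemma D_add: "i \<in> I \<Longrightarrow> a \<in> D i \<Longrightarrow> b \<in> D i \<Longrightarrow> a \<oplus>\<^bsub>C\<^esub> b \<in> D i"
  using subc unfolding left_subcomodule_def left_submodule_def by blast
lemma D_sm: "i \<in> I \<Longrightarrow> r \<in> carrier R \<Longrightarrow> a \<in> D i \<Longrightarrow> r \<odot>\<^bsub>C\<^esub> a \<in> D i"
  using subc unfolding left_subcomodule_def left_submodule_def by blast
lemma D_neg: "i \<in> I \<Longrightarrow> a \<in> D i \<Longrightarrow> \<ominus>\<^bsub>C\<^esub> a \<in> D i"
proof -
  assume i: "i \<in> I" and a: "a \<in> D i"
  then have "a \<in> carrier C" using D_sub by auto
  then show ?thesis using D_sm[OF i _ a, of "\<ominus>\<^bsub>R\<^esub> \<one>\<^bsub>R\<^esub>"] by (simp add: sm_neg)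
qed
lemma D_comod: "i \<in> I \<Longrightarrow> c \<in> D i \<Longrightarrow> \<exists>xs. set xs \<subseteq> carrier C \<times> D i \<and> tens2_eq R C (\<Delta> c) xs"
  using subc unfolding left_subcomodule_def by blast

lemma ids_exists: "c \<in> carrier C \<Longrightarrow> \<exists>J x. finite J \<and> J \<subseteq> I \<and> (\<forall>i\<in>J. x i \<in> D i) \<and> c = finsum C x J"
  using ids unfolding internal_direct_sum_def by blast
lemma ids_indep: "finite J \<Longrightarrow> J \<subseteq> I \<Longrightarrow> (\<forall>i\<in>J. x i \<in> D i) \<Longrightarrow> finsum C x J = \<zero>\<^bsub>C\<^esub> \<Longrightarrow> i \<in> J \<Longrightarrow> x i = \<zero>\<^bsub>C\<^esub>"
  using ids unfolding internal_direct_sum_def by blast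

definition rep :: "'c \<Rightarrow> 'i set \<Rightarrow> ('i \<Rightarrow> 'c) \<Rightarrow> bool" where
  "rep c J x \<longleftrightarrow> finite J \<and> J \<subseteq> I \<and> (\<forall>i\<in>J. x i \<in> D i) \<and> c = finsum C x J"

definition ext :: "'i set \<Rightarrow> ('i \<Rightarrow> 'c) \<Rightarrow> 'i \<Rightarrow> 'c" where
  "ext J x i = (if i \<in> J then x i else \<zero>\<^bsub>C\<^esub>)"

lemma rep_fun: "rep c J x \<Longrightarrow> x \<in> J \<rightarrow> carrier C"
  unfolding rep_def using D_sub by blast

lemma ext_closed: "rep c J x \<Longrightarrow> ext J x i \<in> carrier C"
  unfolding ext_def using rep_fun by auto

lemma ext_sum: "rep c J x \<Longrightarrow> finite K \<Longrightarrow> J \<subseteq> K \<Longrightarrow> finsum C (ext J x) K = c"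
proof -
  assume r: "rep c J x" and K: "finite K" "J \<subseteq> K"
  have "finsum C (ext J x) K = finsum C x J"
    by (rule C.add.finprod_mono_neutral_cong_right) (use K r rep_fun[OF r] in \<open>auto simp: ext_def rep_def\<close>)
  then show ?thesis using r by (simp add: rep_def)
qed

lemma rep_uniq:
  assumes r1: "rep c J x" and r2: "rep c J' y"
  shows "ext J x = ext J' y"
proof
  fix i
  define K where "K = J \<union> J'"
  have K: "finite K" "K \<subseteq> I" "J \<subseteq> K" "J' \<subseteq> K" using r1 r2 by (auto simp: K_def rep_def)
  define w where "w j = ext J x j \<oplus>\<^bsub>C\<^esub> \<ominus>\<^bsub>C\<^esub> ext J' y j" for j
  have c: "c \<in> carrier C" using r1 rep_fun[OF r1] by (auto simp: rep_def)
  have e1: "ext J x \<in> K \<rightarrow> carrier C" "ext J' y \<in> K \<rightarrow> carrier C"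
    using ext_closed[OF r1] ext_closed[OF r2] by auto
  have "finsum C w K = finsum C (ext J x) K \<oplus>\<^bsub>C\<^esub> finsum C (\<lambda>j. \<ominus>\<^bsub>C\<^esub> ext J' y j) K"
    unfolding w_def by (rule C.finsum_addf) (use e1 in auto)
  also have "\<dots> = c \<oplus>\<^bsub>C\<^esub> \<ominus>\<^bsub>C\<^esub> c"
    using ext_sum[OF r1 K(1,3)] ext_sum[OF r2 K(1,4)] C.finsum_neg[OF e1(2)] by simp
  also have "\<dots> = \<zero>\<^bsub>C\<^esub>" using c by (simp add: C.r_neg)
  finally have w0: "finsum C w K = \<zero>\<^bsub>C\<^esub>" .
  have wD: "\<forall>j\<in>K. w j \<in> D j"
  proof
    fix j assume j: "j \<in> K"
    then have jI: "j \<in> I" using K by auto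
    have "ext J x j \<in> D j" "ext J' y j \<in> D j"
      using r1 r2 jI D_zero by (auto simp: ext_def rep_def)
    then show "w j \<in> D j" unfolding w_def using D_add[OF jI] D_neg[OF jI] by blast
  qed
  show "ext J x i = ext J' y i"
  proof (cases "i \<in> K")
    case True
    have "w i = \<zero>\<^bsub>C\<^esub>" by (rule ids_indep[OF K(1,2) wD w0 True])
    then show ?thesis unfolding w_def by (rule C.minus_eq_zero[OF ext_closed[OF r1] ext_closed[OF r2]])
  next
    case False
    then show ?thesis by (auto simp: ext_def K_def)
  qed
qed

definition coord :: "'c \<Rightarrow> 'i \<Rightarrow> 'c" where
  "coord c = (SOME z. \<exists>J x. rep c J x \<and> z = ext J x)"

lemma rep_exists: "c \<in> carrier C \<Longrightarrow> \<exists>J x. rep c J x"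
  using ids_exists unfolding rep_def by blast

lemma coord_eq: "rep c J x \<Longrightarrow> coord c = ext J x"
proof -
  assume r: "rep c J x"
  have ex: "\<exists>z J x. rep c J x \<and> z = ext J x" using r by blast
  have "\<exists>J' x'. rep c J' x' \<and> coord c = ext J' x'"
    unfolding coord_def by (rule someI_ex[OF ex])
  then obtain J' x' where r': "rep c J' x'" and e: "coord c = ext J' x'" by blast
  show ?thesis using e rep_uniq[OF r' r] by simp
qed

lemma coord_rep: "c \<in> carrier C \<Longrightarrow> \<exists>J. finite J \<and> J \<subseteq> I \<and> rep c J (coord c) \<and> (\<forall>i. i \<notin> J \<longrightarrow> coord c i = \<zero>\<^bsub>C\<^esub>)"
proof -
  assume c: "c \<in> carrier C"
  obtain J x where r: "rep c J x" using rep_exists[OF c] by blast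
  have ce: "coord c = ext J x" by (rule coord_eq[OF r])
  have fJ: "finite J" and JI: "J \<subseteq> I" using r unfolding rep_def by blast+
  have "rep c J (coord c)"
    unfolding rep_def
  proof (intro conjI)
    show "finite J" "J \<subseteq> I" using fJ JI by auto
    show "\<forall>i\<in>J. coord c i \<in> D i"
    proof
      fix i assume i: "i \<in> J"
      have "coord c i = x i" using ce i by (simp add: ext_def)
      moreover have "x i \<in> D i" using r i unfolding rep_def by blast
      ultimately show "coord c i \<in> D i" by simp
    qed
    show "c = finsum C (coord c) J" unfolding ce by (rule ext_sum[OF r fJ subset_refl, symmetric])
  qed
  moreover have "\<forall>i. i \<notin> J \<longrightarrow> coord c i = \<zero>\<^bsub>C\<^esub>" using ce by (simp add: ext_def)
  ultimately show ?thesis using fJ JI by blast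
qed

lemma coord_closed: "c \<in> carrier C \<Longrightarrow> coord c i \<in> carrier C"
proof -
  assume c: "c \<in> carrier C"
  obtain J where J: "finite J" "J \<subseteq> I" "rep c J (coord c)" "\<forall>i. i \<notin> J \<longrightarrow> coord c i = \<zero>\<^bsub>C\<^esub>"
    using coord_rep[OF c] by blast
  show ?thesis
  proof (cases "i \<in> J")
    case True then show ?thesis using rep_fun[OF J(3)] by blast
  next
    case False then show ?thesis using J(4) by simp
  qed
qed

lemma coord_D: "c \<in> carrier C \<Longrightarrow> i \<in> I \<Longrightarrow> coord c i \<in> D i"
proof -
  assume c: "c \<in> carrier C" and i: "i \<in> I"
  obtain J where J: "finite J" "J \<subseteq> I" "rep c J (coord c)" "\<forall>i. i \<notin> J \<longrightarrow> coord c i = \<zero>\<^bsub>C\<^esub>"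
    using coord_rep[OF c] by blast
  show ?thesis
  proof (cases "i \<in> J")
    case True then show ?thesis using J(3) unfolding rep_def by blast
  next
    case False then show ?thesis using J(4) D_zero[OF i] by simp
  qed
qed

lemma coord_sum: "c \<in> carrier C \<Longrightarrow> \<exists>J. finite J \<and> J \<subseteq> I \<and> (\<forall>K. finite K \<and> J \<subseteq> K \<and> K \<subseteq> I \<longrightarrow> finsum C (coord c) K = c)"
proof -
  assume c: "c \<in> carrier C"
  obtain J where J: "finite J" "J \<subseteq> I" "rep c J (coord c)" "\<forall>i. i \<notin> J \<longrightarrow> coord c i = \<zero>\<^bsub>C\<^esub>"
    using coord_rep[OF c] by blast
  have e: "ext J (coord c) = coord c" using J(4) by (auto simp: ext_def)
  have "\<forall>K. finite K \<and> J \<subseteq> K \<and> K \<subseteq> I \<longrightarrow> finsum C (coord c) K = c"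
    using ext_sum[OF J(3)] unfolding e by blast
  then show ?thesis using J(1,2) by blast
qed

end



context cor begin

definition addh :: "('c \<Rightarrow> 'c) \<Rightarrow> bool" where
  "addh A \<longleftrightarrow> (\<forall>c\<in>carrier C. A c \<in> carrier C) \<and>
     (\<forall>c\<in>carrier C. \<forall>d\<in>carrier C. A (c \<oplus>\<^bsub>C\<^esub> d) = A c \<oplus>\<^bsub>C\<^esub> A d)"

definition lin :: "('c \<Rightarrow> 'c) \<Rightarrow> bool" where
  "lin A \<longleftrightarrow> addh A \<and> (\<forall>r\<in>carrier R. \<forall>c\<in>carrier C. A (r \<odot>\<^bsub>C\<^esub> c) = r \<odot>\<^bsub>C\<^esub> A c)"

lemma addhI: "(\<And>c. c \<in> carrier C \<Longrightarrow> A c \<in> carrier C) \<Longrightarrow>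
  (\<And>c d. c \<in> carrier C \<Longrightarrow> d \<in> carrier C \<Longrightarrow> A (c \<oplus>\<^bsub>C\<^esub> d) = A c \<oplus>\<^bsub>C\<^esub> A d) \<Longrightarrow> addh A"
  unfolding addh_def by blast

lemma linI: "addh A \<Longrightarrow> (\<And>r c. r \<in> carrier R \<Longrightarrow> c \<in> carrier C \<Longrightarrow> A (r \<odot>\<^bsub>C\<^esub> c) = r \<odot>\<^bsub>C\<^esub> A c) \<Longrightarrow> lin A"
  unfolding lin_def by blast

lemma addh_closed: "addh A \<Longrightarrow> c \<in> carrier C \<Longrightarrow> A c \<in> carrier C" unfolding addh_def by blast
lemma addh_add: "addh A \<Longrightarrow> c \<in> carrier C \<Longrightarrow> d \<in> carrier C \<Longrightarrow> A (c \<oplus>\<^bsub>C\<^esub> d) = A c \<oplus>\<^bsub>C\<^esub> A d"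
  unfolding addh_def by blast
lemma lin_addh: "lin A \<Longrightarrow> addh A" unfolding lin_def by blast
lemma lin_sm: "lin A \<Longrightarrow> r \<in> carrier R \<Longrightarrow> c \<in> carrier C \<Longrightarrow> A (r \<odot>\<^bsub>C\<^esub> c) = r \<odot>\<^bsub>C\<^esub> A c"
  unfolding lin_def by blast

lemma addh_zero: "addh A \<Longrightarrow> A \<zero>\<^bsub>C\<^esub> = \<zero>\<^bsub>C\<^esub>"
proof -
  assume a: "addh A"
  have "A \<zero>\<^bsub>C\<^esub> \<in> carrier C" using addh_closed[OF a] by simp
  moreover have "A \<zero>\<^bsub>C\<^esub> \<oplus>\<^bsub>C\<^esub> A \<zero>\<^bsub>C\<^esub> = A \<zero>\<^bsub>C\<^esub>"
    using addh_add[OF a, of "\<zero>\<^bsub>C\<^esub>" "\<zero>\<^bsub>C\<^esub>"] by simp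
  ultimately show ?thesis by (rule C.idem_zero)
qed

lemma addh_finsum: "addh A \<Longrightarrow> x \<in> J \<rightarrow> carrier C \<Longrightarrow> A (finsum C x J) = finsum C (\<lambda>i. A (x i)) J"
proof (induct J rule: infinite_finite_induct)
  case (infinite J) then show ?case by (simp add: addh_zero)
next
  case empty then show ?case by (simp add: addh_zero)
next
  case (insert j J)
  then have x: "x \<in> J \<rightarrow> carrier C" "x j \<in> carrier C" by auto
  have Ax: "(\<lambda>i. A (x i)) \<in> J \<rightarrow> carrier C" "A (x j) \<in> carrier C"
    using x addh_closed[OF insert(4)] by auto
  have "A (finsum C x (insert j J)) = A (x j \<oplus>\<^bsub>C\<^esub> finsum C x J)"
    using insert x by simp
  also have "\<dots> = A (x j) \<oplus>\<^bsub>C\<^esub> A (finsum C x J)"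
    using x addh_add[OF insert(4)] by simp
  also have "\<dots> = A (x j) \<oplus>\<^bsub>C\<^esub> finsum C (\<lambda>i. A (x i)) J" using insert x by simp
  also have "\<dots> = finsum C (\<lambda>i. A (x i)) (insert j J)" using insert Ax by simp
  finally show ?case .
qed

lemma addh_lsum: "addh A \<Longrightarrow> set xs \<subseteq> carrier C \<Longrightarrow> A (lsum C xs) = lsum C (map A xs)"
  by (rule lsum_hom) (auto simp: addh_zero addh_add C.abelian_monoid_axioms)

lemma addh_smult: "r \<in> carrier R \<Longrightarrow> addh (\<lambda>c. r \<odot>\<^bsub>C\<^esub> c)"
  by (rule addhI) (auto simp: sm_rdistr)

lemma Psi_lin: "f \<in> ldual R C \<Longrightarrow> lin (Psi f)"
  by (intro linI addhI) (auto simp: Psi_add Psi_sm)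

lemma lin_ldual: "lin A \<Longrightarrow> f \<in> ldual R C \<Longrightarrow> (\<lambda>c\<in>carrier C. f (A c)) \<in> ldual R C"
proof (rule ldualI)
  assume a: "lin A" and f: "f \<in> ldual R C"
  note h = lin_addh[OF a]
  show "\<And>c. c \<in> carrier C \<Longrightarrow> (\<lambda>c\<in>carrier C. f (A c)) c \<in> carrier R"
    using addh_closed[OF h] f by simp
  show "\<And>c d. c \<in> carrier C \<Longrightarrow> d \<in> carrier C \<Longrightarrow>
      (\<lambda>c\<in>carrier C. f (A c)) (c \<oplus>\<^bsub>C\<^esub> d) = (\<lambda>c\<in>carrier C. f (A c)) c \<oplus>\<^bsub>R\<^esub> (\<lambda>c\<in>carrier C. f (A c)) d"
    using addh_closed[OF h] addh_add[OF h] f by (simp add: ldual_add)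
  show "\<And>r c. r \<in> carrier R \<Longrightarrow> c \<in> carrier C \<Longrightarrow>
      (\<lambda>c\<in>carrier C. f (A c)) (r \<odot>\<^bsub>C\<^esub> c) = r \<otimes>\<^bsub>R\<^esub> (\<lambda>c\<in>carrier C. f (A c)) c"
    using addh_closed[OF h] lin_sm[OF a] f by (simp add: ldual_sm)
qed simp

end

context dsum begin

lemma coord_J: "c \<in> carrier C \<Longrightarrow> \<exists>J. finite J \<and> J \<subseteq> I \<and> (\<forall>i. i \<notin> J \<longrightarrow> coord c i = \<zero>\<^bsub>C\<^esub>) \<and>
   (\<forall>K. finite K \<and> J \<subseteq> K \<and> K \<subseteq> I \<longrightarrow> finsum C (coord c) K = c)"
proof -
  assume c: "c \<in> carrier C"
  obtain J where J: "finite J" "J \<subseteq> I" "rep c J (coord c)" "\<forall>i. i \<notin> J \<longrightarrow> coord c i = \<zero>\<^bsub>C\<^esub>"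
    using coord_rep[OF c] by blast
  have e: "ext J (coord c) = coord c" using J(4) by (auto simp: ext_def)
  have "\<forall>K. finite K \<and> J \<subseteq> K \<and> K \<subseteq> I \<longrightarrow> finsum C (coord c) K = c"
    using ext_sum[OF J(3)] unfolding e by blast
  then show ?thesis using J(1,2,4) by blast
qed

lemma coord_fun: "c \<in> carrier C \<Longrightarrow> coord c \<in> K \<rightarrow> carrier C"
  using coord_closed by blast

lemma coord_add: assumes c: "c \<in> carrier C" and d: "d \<in> carrier C"
  shows "coord (c \<oplus>\<^bsub>C\<^esub> d) i = coord c i \<oplus>\<^bsub>C\<^esub> coord d i"
proof -
  obtain J1 where J1: "finite J1" "J1 \<subseteq> I" "\<forall>i. i \<notin> J1 \<longrightarrow> coord c i = \<zero>\<^bsub>C\<^esub>"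
    "\<forall>K. finite K \<and> J1 \<subseteq> K \<and> K \<subseteq> I \<longrightarrow> finsum C (coord c) K = c" using coord_J[OF c] by blast
  obtain J2 where J2: "finite J2" "J2 \<subseteq> I" "\<forall>i. i \<notin> J2 \<longrightarrow> coord d i = \<zero>\<^bsub>C\<^esub>"
    "\<forall>K. finite K \<and> J2 \<subseteq> K \<and> K \<subseteq> I \<longrightarrow> finsum C (coord d) K = d" using coord_J[OF d] by blast
  define K where "K = J1 \<union> J2"
  define z where "z i = coord c i \<oplus>\<^bsub>C\<^esub> coord d i" for i
  have K: "finite K" "K \<subseteq> I" "J1 \<subseteq> K" "J2 \<subseteq> K" using J1 J2 by (auto simp: K_def)
  have "rep (c \<oplus>\<^bsub>C\<^esub> d) K z"
    unfolding rep_def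
  proof (intro conjI)
    show "finite K" "K \<subseteq> I" using K by auto
    show "\<forall>i\<in>K. z i \<in> D i" unfolding z_def using K(2) coord_D[OF c] coord_D[OF d] D_add by blast
    have "finsum C z K = finsum C (coord c) K \<oplus>\<^bsub>C\<^esub> finsum C (coord d) K"
      unfolding z_def by (rule C.finsum_addf) (use coord_fun[OF c] coord_fun[OF d] in auto)
    also have "\<dots> = c \<oplus>\<^bsub>C\<^esub> d" using J1(4) J2(4) K by simp
    finally show "c \<oplus>\<^bsub>C\<^esub> d = finsum C z K" by simp
  qed
  then have "coord (c \<oplus>\<^bsub>C\<^esub> d) = ext K z" by (rule coord_eq)
  then show ?thesis using J1(3) J2(3) by (auto simp: ext_def z_def K_def)
qed

lemma finsum_sm: "r \<in> carrier R \<Longrightarrow> x \<in> J \<rightarrow> carrier C \<Longrightarrow> finsum C (\<lambda>i. r \<odot>\<^bsub>C\<^esub> x i) J = r \<odot>\<^bsub>C\<^esub> finsum C x J"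
  using addh_finsum[OF addh_smult] by metis

lemma coord_sm: assumes r: "r \<in> carrier R" and c: "c \<in> carrier C"
  shows "coord (r \<odot>\<^bsub>C\<^esub> c) i = r \<odot>\<^bsub>C\<^esub> coord c i"
proof -
  obtain J1 where J1: "finite J1" "J1 \<subseteq> I" "\<forall>i. i \<notin> J1 \<longrightarrow> coord c i = \<zero>\<^bsub>C\<^esub>"
    "\<forall>K. finite K \<and> J1 \<subseteq> K \<and> K \<subseteq> I \<longrightarrow> finsum C (coord c) K = c" using coord_J[OF c] by blast
  define z where "z i = r \<odot>\<^bsub>C\<^esub> coord c i" for i
  have "rep (r \<odot>\<^bsub>C\<^esub> c) J1 z"
    unfolding rep_def
  proof (intro conjI)
    show "finite J1" "J1 \<subseteq> I" using J1 by auto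
    show "\<forall>i\<in>J1. z i \<in> D i" unfolding z_def using J1(2) coord_D[OF c] D_sm[OF _ r] by blast
    have "finsum C z J1 = r \<odot>\<^bsub>C\<^esub> finsum C (coord c) J1"
      unfolding z_def by (rule finsum_sm[OF r coord_fun[OF c]])
    also have "\<dots> = r \<odot>\<^bsub>C\<^esub> c" using J1 by simp
    finally show "r \<odot>\<^bsub>C\<^esub> c = finsum C z J1" by simp
  qed
  then have "coord (r \<odot>\<^bsub>C\<^esub> c) = ext J1 z" by (rule coord_eq)
  then show ?thesis using J1(3) r by (auto simp: ext_def z_def)
qed

lemma coord_single: assumes i: "i \<in> I" and x: "x \<in> D i"
  shows "coord x = (\<lambda>j. if j = i then x else \<zero>\<^bsub>C\<^esub>)"
proof -
  have xc: "x \<in> carrier C" using x D_sub[OF i] by auto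
  have "rep x {i} (\<lambda>_. x)" unfolding rep_def using i x xc by auto
  then have "coord x = ext {i} (\<lambda>_. x)" by (rule coord_eq)
  then show ?thesis by (auto simp: ext_def)
qed

definition P :: "'i set \<Rightarrow> 'c \<Rightarrow> 'c" where "P J0 c = finsum C (coord c) J0"

lemma P_lin: "lin (P J0)"
proof (intro linI addhI)
  show "\<And>c. c \<in> carrier C \<Longrightarrow> P J0 c \<in> carrier C"
    unfolding P_def using coord_fun by (intro C.finsum_closed) auto
  fix c d assume c: "c \<in> carrier C" and d: "d \<in> carrier C"
  show "P J0 (c \<oplus>\<^bsub>C\<^esub> d) = P J0 c \<oplus>\<^bsub>C\<^esub> P J0 d"
    unfolding P_def coord_add[OF c d] by (rule C.finsum_addf) (use coord_fun[OF c] coord_fun[OF d] in auto)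
next
  fix r c assume r: "r \<in> carrier R" and c: "c \<in> carrier C"
  show "P J0 (r \<odot>\<^bsub>C\<^esub> c) = r \<odot>\<^bsub>C\<^esub> P J0 c"
    unfolding P_def coord_sm[OF r c] by (rule finsum_sm[OF r coord_fun[OF c]])
qed

lemma P_single: assumes i: "i \<in> I" and x: "x \<in> D i" and J0: "finite J0"
  shows "P J0 x = (if i \<in> J0 then x else \<zero>\<^bsub>C\<^esub>)"
proof -
  have xc: "x \<in> carrier C" using x D_sub[OF i] by auto
  show ?thesis
  proof (cases "i \<in> J0")
    case True
    have "P J0 x = finsum C (\<lambda>j. if j = i then x else \<zero>\<^bsub>C\<^esub>) J0" unfolding P_def coord_single[OF i x] ..
    also have "\<dots> = finsum C (\<lambda>_. x) {i}"
      by (rule C.add.finprod_mono_neutral_cong_right) (use J0 True xc in auto)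
    also have "\<dots> = x" using xc by simp
    finally show ?thesis using True by simp
  next
    case False
    have "P J0 x = finsum C (\<lambda>j. if j = i then x else \<zero>\<^bsub>C\<^esub>) J0" unfolding P_def coord_single[OF i x] ..
    also have "\<dots> = finsum C (\<lambda>_. \<zero>\<^bsub>C\<^esub>) J0"
      by (rule C.finsum_cong') (use False in auto)
    also have "\<dots> = \<zero>\<^bsub>C\<^esub>" by simp
    finally show ?thesis using False by simp
  qed
qed

end



lemma (in abelian_monoid) lsum_zeros: "lsum G (map (\<lambda>_. \<zero>) xs) = \<zero>"
  by (induct xs) auto

lemma (in abelian_monoid) lsum_map_add:
  "(\<And>p. p \<in> set ps \<Longrightarrow> u p \<in> carrier G \<and> v p \<in> carrier G) \<Longrightarrow>
   lsum G (map (\<lambda>p. u p \<oplus> v p) ps) = lsum G (map u ps) \<oplus> lsum G (map v ps)"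
proof (induct ps)
  case (Cons p ps)
  have cl: "lsum G (map u ps) \<in> carrier G" "lsum G (map v ps) \<in> carrier G"
    using Cons(2) by (auto intro!: lsum_closed)
  have uv: "u p \<in> carrier G" "v p \<in> carrier G" using Cons(2) by auto
  show ?case using Cons cl uv by (simp add: a_ac)
qed simp

context dsum begin

lemma Psi_m_single:
  assumes f: "f \<in> ldual R C" and J0: "finite J0" and i: "i \<in> I" and x: "x \<in> D i"
  shows "Psi (\<lambda>c\<in>carrier C. f (P J0 c)) x = (if i \<in> J0 then Psi f x else \<zero>\<^bsub>C\<^esub>)"
proof -
  define m where "m = (\<lambda>c\<in>carrier C. f (P J0 c))"
  have m: "m \<in> ldual R C" unfolding m_def by (rule lin_ldual[OF P_lin f])
  obtain xs where xs: "set xs \<subseteq> carrier C \<times> D i" and eq: "tens2_eq R C (\<Delta> x) xs"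
    using D_comod[OF i x] by blast
  have bD: "\<And>a b. (a, b) \<in> set xs \<Longrightarrow> b \<in> D i \<and> a \<in> carrier C \<and> b \<in> carrier C"
    using xs D_sub[OF i] by auto
  have mb: "m b = (if i \<in> J0 then f b else \<zero>\<^bsub>R\<^esub>)" if "(a, b) \<in> set xs" for a b
    using bD[OF that] P_single[OF i _ J0] f by (auto simp: m_def)
  have "Psi m x = T m xs" unfolding Psi_def by (rule T_resp[OF m eq])
  also have "\<dots> = (if i \<in> J0 then T f xs else \<zero>\<^bsub>C\<^esub>)"
  proof (cases "i \<in> J0")
    case True
    then show ?thesis unfolding T_def using mb by (auto intro!: lsum_cong_map)
  next
    case False
    have "T m xs = lsum C (map (\<lambda>_. \<zero>\<^bsub>C\<^esub>) xs)"
      unfolding T_def by (rule lsum_cong_map) (use mb bD False in auto)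
    then show ?thesis using False C.lsum_zeros by simp
  qed
  also have "\<dots> = (if i \<in> J0 then Psi f x else \<zero>\<^bsub>C\<^esub>)"
    unfolding Psi_def using T_resp[OF f eq] by simp
  finally show ?thesis unfolding m_def .
qed

lemma Psi_P:
  assumes f: "f \<in> ldual R C" and J0: "finite J0" "J0 \<subseteq> I" and c: "c \<in> carrier C"
  shows "Psi (\<lambda>c\<in>carrier C. f (P J0 c)) c = Psi f (P J0 c)"
proof -
  define m where "m = (\<lambda>c\<in>carrier C. f (P J0 c))"
  have m: "m \<in> ldual R C" unfolding m_def by (rule lin_ldual[OF P_lin f])
  obtain J where J: "finite J" "J \<subseteq> I" "\<forall>i. i \<notin> J \<longrightarrow> coord c i = \<zero>\<^bsub>C\<^esub>"
    "\<forall>K. finite K \<and> J \<subseteq> K \<and> K \<subseteq> I \<longrightarrow> finsum C (coord c) K = c" using coord_J[OF c] by blast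
  define K where "K = J \<union> J0"
  have K: "finite K" "K \<subseteq> I" "J \<subseteq> K" "J0 \<subseteq> K" using J J0 by (auto simp: K_def)
  have "Psi m c = Psi m (finsum C (coord c) K)" using J(4) K by simp
  also have "\<dots> = finsum C (\<lambda>i. Psi m (coord c i)) K"
    by (rule addh_finsum[OF lin_addh[OF Psi_lin[OF m]] coord_fun[OF c]])
  also have "\<dots> = finsum C (\<lambda>i. if i \<in> J0 then Psi f (coord c i) else \<zero>\<^bsub>C\<^esub>) K"
  proof (rule C.finsum_cong')
    show "(\<lambda>i. if i \<in> J0 then Psi f (coord c i) else \<zero>\<^bsub>C\<^esub>) \<in> K \<rightarrow> carrier C"
      using f coord_closed[OF c] by auto
    fix i assume iK: "i \<in> K"
    have iI: "i \<in> I" using K(2) iK by blast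
    show "Psi m (coord c i) = (if i \<in> J0 then Psi f (coord c i) else \<zero>\<^bsub>C\<^esub>)"
      unfolding m_def by (rule Psi_m_single[OF f J0(1) iI coord_D[OF c iI]])
  qed simp
  also have "\<dots> = finsum C (\<lambda>i. Psi f (coord c i)) J0"
    by (rule C.add.finprod_mono_neutral_cong_right) (use K f coord_closed[OF c] in auto)
  also have "\<dots> = Psi f (finsum C (coord c) J0)"
    by (rule addh_finsum[OF lin_addh[OF Psi_lin[OF f]] coord_fun[OF c], symmetric])
  finally show ?thesis unfolding m_def P_def .
qed

definition Phi :: "(('c \<Rightarrow> 'r) \<times> 'c) list \<Rightarrow> 'c \<Rightarrow> 'c" where
  "Phi ps c = lsum C (map (\<lambda>(\<phi>, y). \<phi> c \<odot>\<^bsub>C\<^esub> y) ps)"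

lemma Phi_lin: assumes ps: "set ps \<subseteq> ldual R C \<times> carrier C" shows "lin (Phi ps)"
proof (intro linI addhI)
  fix c assume c: "c \<in> carrier C"
  show "Phi ps c \<in> carrier C" unfolding Phi_def by (rule C.lsum_closed) (use ps c in auto)
next
  fix c d assume c: "c \<in> carrier C" and d: "d \<in> carrier C"
  have "Phi ps (c \<oplus>\<^bsub>C\<^esub> d) = lsum C (map (\<lambda>p. (\<lambda>(\<phi>, y). \<phi> c \<odot>\<^bsub>C\<^esub> y) p \<oplus>\<^bsub>C\<^esub> (\<lambda>(\<phi>, y). \<phi> d \<odot>\<^bsub>C\<^esub> y) p) ps)"
    unfolding Phi_def by (rule lsum_cong_map) (use ps c d in \<open>auto simp: ldual_add sm_ldistr\<close>)
  also have "\<dots> = Phi ps c \<oplus>\<^bsub>C\<^esub> Phi ps d"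
    unfolding Phi_def by (rule C.lsum_map_add) (use ps c d in auto)
  finally show "Phi ps (c \<oplus>\<^bsub>C\<^esub> d) = Phi ps c \<oplus>\<^bsub>C\<^esub> Phi ps d" .
next
  fix r c assume r: "r \<in> carrier R" and c: "c \<in> carrier C"
  have "Phi ps (r \<odot>\<^bsub>C\<^esub> c) = lsum C (map (\<lambda>x. r \<odot>\<^bsub>C\<^esub> x) (map (\<lambda>(\<phi>, y). \<phi> c \<odot>\<^bsub>C\<^esub> y) ps))"
    unfolding Phi_def map_map by (rule lsum_cong_map) (use ps c r in \<open>auto simp: ldual_sm sm_assoc\<close>)
  also have "\<dots> = r \<odot>\<^bsub>C\<^esub> Phi ps c"
    unfolding Phi_def by (rule addh_lsum[OF addh_smult[OF r], symmetric]) (use ps c in auto)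
  finally show "Phi ps (r \<odot>\<^bsub>C\<^esub> c) = r \<odot>\<^bsub>C\<^esub> Phi ps c" .
qed

lemma Phi_span:
  assumes ps: "set ps \<subseteq> ldual R C \<times> carrier C"
    and gs: "set gs \<subseteq> carrier C" "\<forall>g\<in>set gs. Phi ps g = g"
    and rs: "set rs \<subseteq> carrier R" "length rs = length gs"
  shows "Phi ps (lsum C (map2 (\<lambda>r g. r \<odot>\<^bsub>C\<^esub> g) rs gs)) = lsum C (map2 (\<lambda>r g. r \<odot>\<^bsub>C\<^esub> g) rs gs)"
  using rs(2) rs(1) gs
proof (induct rs gs rule: list_induct2)
  case Nil
  then show ?case using addh_zero[OF lin_addh[OF Phi_lin[OF ps]]] by simp
next
  case (Cons r rs g gs)
  have cl: "lsum C (map2 (\<lambda>r g. r \<odot>\<^bsub>C\<^esub> g) rs gs) \<in> carrier C"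
  proof (rule C.lsum_closed)
    have "\<forall>p\<in>set (zip rs gs). fst p \<in> carrier R \<and> snd p \<in> carrier C"
      using Cons(3,4) by (auto dest: set_zip_leftD set_zip_rightD)
    then show "set (map2 (\<lambda>r g. r \<odot>\<^bsub>C\<^esub> g) rs gs) \<subseteq> carrier C" by auto
  qed
  have rg: "r \<in> carrier R" "g \<in> carrier C" "Phi ps g = g" using Cons by auto
  have "Phi ps (r \<odot>\<^bsub>C\<^esub> g \<oplus>\<^bsub>C\<^esub> lsum C (map2 (\<lambda>r g. r \<odot>\<^bsub>C\<^esub> g) rs gs))
      = r \<odot>\<^bsub>C\<^esub> Phi ps g \<oplus>\<^bsub>C\<^esub> Phi ps (lsum C (map2 (\<lambda>r g. r \<odot>\<^bsub>C\<^esub> g) rs gs))"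
    using Phi_lin[OF ps] cl rg by (simp add: addh_add[OF lin_addh] lin_sm)
  then show ?case using Cons rg by simp
qed

lemma Phi_sum:
  assumes ps: "set ps \<subseteq> ldual R C \<times> carrier C"
    and x: "x \<in> J \<rightarrow> carrier C" "\<forall>i\<in>J. Phi ps (x i) = x i"
  shows "Phi ps (finsum C x J) = finsum C x J"
proof -
  have "Phi ps (finsum C x J) = finsum C (\<lambda>i. Phi ps (x i)) J"
    by (rule addh_finsum[OF lin_addh[OF Phi_lin[OF ps]] x(1)])
  also have "\<dots> = finsum C x J" by (rule C.finsum_cong') (use x in auto)
  finally show ?thesis .
qed

lemma alpha_J0:
  assumes J0: "finite J0" "J0 \<subseteq> I"
  shows "\<exists>ps. set ps \<subseteq> ldual R C \<times> carrier C \<and> (\<forall>c\<in>carrier C. Phi ps (P J0 c) = P J0 c)"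
proof -
  define gs where "gs i = (SOME gs. set gs \<subseteq> D i \<and> (\<forall>c\<in>D i. \<exists>rs. length rs = length gs \<and> set rs \<subseteq> carrier R \<and>
        c = lsum C (map2 (\<lambda>r g. r \<odot>\<^bsub>C\<^esub> g) rs gs)))" for i
  have gs: "set (gs i) \<subseteq> D i \<and> (\<forall>c\<in>D i. \<exists>rs. length rs = length (gs i) \<and> set rs \<subseteq> carrier R \<and>
        c = lsum C (map2 (\<lambda>r g. r \<odot>\<^bsub>C\<^esub> g) rs (gs i)))" if i: "i \<in> I" for i
  proof -
    have "fin_gen_left R C (D i)" using fg i by blast
    then show ?thesis unfolding gs_def fin_gen_left_def by (rule someI_ex)
  qed
  define G0 where "G0 = (\<Union>i\<in>J0. set (gs i))"
  have G0: "finite G0" "G0 \<subseteq> carrier C"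
    using J0 gs D_sub unfolding G0_def by auto blast
  obtain ps where ps: "set ps \<subseteq> ldual R C \<times> carrier C"
    and pfix: "\<forall>c\<in>G0. c = lsum C (map (\<lambda>(f, x). f c \<odot>\<^bsub>C\<^esub> x) ps)"
    using alpha G0 unfolding left_alpha_def by blast
  have fixG: "Phi ps g = g" if "g \<in> G0" for g using pfix that unfolding Phi_def by auto
  have fixD: "Phi ps x = x" if i: "i \<in> J0" and x: "x \<in> D i" for i x
  proof -
    have iI: "i \<in> I" using i J0 by auto
    obtain rs where rs: "length rs = length (gs i)" "set rs \<subseteq> carrier R"
      and xe: "x = lsum C (map2 (\<lambda>r g. r \<odot>\<^bsub>C\<^esub> g) rs (gs i))" using gs[OF iI] x by blast
    have "set (gs i) \<subseteq> carrier C" using gs[OF iI] D_sub[OF iI] by auto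
    moreover have "\<forall>g\<in>set (gs i). Phi ps g = g" using fixG i unfolding G0_def by auto
    ultimately show ?thesis using Phi_span[OF ps _ _ rs(2,1)] xe by simp
  qed
  have "Phi ps (P J0 c) = P J0 c" if c: "c \<in> carrier C" for c
    unfolding P_def
  proof (rule Phi_sum[OF ps coord_fun[OF c]])
    show "\<forall>i\<in>J0. Phi ps (coord c i) = coord c i"
      using fixD coord_D[OF c] J0(2) by blast
  qed
  then show ?thesis using ps by blast
qed

end



context cor begin

lemma lsum_S_eval: "c \<in> carrier C \<Longrightarrow> lsum S fs c = lsum R (map (\<lambda>u. u c) fs)"
  by (induct fs) (auto simp: dual_ring_def)

lemma lsum_S_ext: "lsum S fs \<in> extensional (carrier C)"
  by (cases fs) (auto simp: dual_ring_def)

lemma dual_mult_ext: "dual_mult R C \<Delta> n h \<in> extensional (carrier C)"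
  by (simp add: dual_mult_def)

end

context dsum begin

lemma dense: "dense_finite_top R C (Rat R C \<Delta> \<epsilon> (dual_rmod R C \<Delta> \<epsilon>))"
  unfolding dense_finite_top_def
proof (intro ballI allI impI)
  fix f F assume f: "f \<in> ldual R C" and F: "finite F \<and> F \<subseteq> carrier C"
  define Jc where "Jc c = (SOME J. finite J \<and> J \<subseteq> I \<and> (\<forall>i. i \<notin> J \<longrightarrow> coord c i = \<zero>\<^bsub>C\<^esub>) \<and>
     (\<forall>K. finite K \<and> J \<subseteq> K \<and> K \<subseteq> I \<longrightarrow> finsum C (coord c) K = c))" for c
  have Jc: "finite (Jc c) \<and> Jc c \<subseteq> I \<and> (\<forall>i. i \<notin> Jc c \<longrightarrow> coord c i = \<zero>\<^bsub>C\<^esub>) \<and>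
     (\<forall>K. finite K \<and> Jc c \<subseteq> K \<and> K \<subseteq> I \<longrightarrow> finsum C (coord c) K = c)" if c: "c \<in> carrier C" for c
    unfolding Jc_def by (rule someI_ex[OF coord_J[OF c]])
  define J0 where "J0 = (\<Union>c\<in>F. Jc c)"
  have J0: "finite J0" "J0 \<subseteq> I" using F Jc unfolding J0_def by auto
  have PF: "P J0 c = c" if c: "c \<in> F" for c
  proof -
    have cc: "c \<in> carrier C" using F c by auto
    have "Jc c \<subseteq> J0" using c unfolding J0_def by auto
    then show ?thesis unfolding P_def using Jc[OF cc] J0 by blast
  qed
  define m where "m = (\<lambda>c\<in>carrier C. f (P J0 c))"
  have m: "m \<in> ldual R C" unfolding m_def by (rule lin_ldual[OF P_lin f])
  have mF: "m \<in> fin_nbhd R C f F"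
    unfolding fin_nbhd_def using m PF F by (auto simp: m_def)
  obtain ps where ps: "set ps \<subseteq> ldual R C \<times> carrier C"
    and pfix: "\<forall>c\<in>carrier C. Phi ps (P J0 c) = P J0 c" using alpha_J0[OF J0] by blast
  define xs where "xs = map (\<lambda>(\<phi>, y). ((\<lambda>c\<in>carrier C. \<phi> (P J0 c)), Psi f y)) ps"
  have xs: "set xs \<subseteq> ldual R C \<times> carrier C"
    unfolding xs_def using ps f lin_ldual[OF P_lin] by auto
  have mR: "m \<in> Rat R C \<Delta> \<epsilon> (dual_rmod R C \<Delta> \<epsilon>)"
  proof (rule RatI[where xs=xs])
    show "m \<in> carrier (dual_rmod R C \<Delta> \<epsilon>)" using m by simp
    show "set xs \<subseteq> carrier (dual_rmod R C \<Delta> \<epsilon>) \<times> carrier C" using xs by simp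
    fix h assume h: "h \<in> ldual R C"
    have "dual_mult R C \<Delta> m h = lsum S (map (\<lambda>(n, c). dual_mult R C \<Delta> n (dual_unit R C \<epsilon> (h c))) xs)"
    proof (rule extensionalityI[OF dual_mult_ext lsum_S_ext])
      fix c assume c: "c \<in> carrier C"
      have Pc: "P J0 c \<in> carrier C" using addh_closed[OF lin_addh[OF P_lin] c] .
      have "dual_mult R C \<Delta> m h c = h (Psi m c)" by (rule dual_mult_eval[OF c])
      also have "\<dots> = h (Psi f (P J0 c))" unfolding m_def using Psi_P[OF f J0 c] by simp
      also have "\<dots> = h (Psi f (lsum C (map (\<lambda>(\<phi>, y). \<phi> (P J0 c) \<odot>\<^bsub>C\<^esub> y) ps)))"
        using pfix c unfolding Phi_def by simp
      also have "\<dots> = h (lsum C (map (Psi f) (map (\<lambda>(\<phi>, y). \<phi> (P J0 c) \<odot>\<^bsub>C\<^esub> y) ps)))"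
        using addh_lsum[OF lin_addh[OF Psi_lin[OF f]], of "map (\<lambda>(\<phi>, y). \<phi> (P J0 c) \<odot>\<^bsub>C\<^esub> y) ps"] ps Pc
        by fastforce
      also have "\<dots> = h (lsum C (map (\<lambda>(\<phi>, y). \<phi> (P J0 c) \<odot>\<^bsub>C\<^esub> Psi f y) ps))"
        unfolding map_map by (rule arg_cong[where f=h], rule lsum_cong_map) (use ps Pc lin_sm[OF Psi_lin[OF f]] in auto)
      also have "\<dots> = lsum R (map h (map (\<lambda>(\<phi>, y). \<phi> (P J0 c) \<odot>\<^bsub>C\<^esub> Psi f y) ps))"
        by (rule ldual_lsum[OF h]) (use ps Pc f in auto)
      also have "\<dots> = lsum R (map (\<lambda>(\<phi>, y). \<phi> (P J0 c) \<otimes>\<^bsub>R\<^esub> h (Psi f y)) ps)"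
        unfolding map_map by (rule lsum_cong_map) (use ps Pc f h in \<open>auto simp: ldual_sm\<close>)
      also have "\<dots> = lsum R (map (\<lambda>u. u c) (map (\<lambda>(n, c). dual_mult R C \<Delta> n (dual_unit R C \<epsilon> (h c))) xs))"
        unfolding xs_def map_map
        by (rule lsum_cong_map) (use ps Pc f h c lin_ldual[OF P_lin] in \<open>auto simp: dual_mult_unit\<close>)
      also have "\<dots> = lsum S (map (\<lambda>(n, c). dual_mult R C \<Delta> n (dual_unit R C \<epsilon> (h c))) xs) c"
        by (rule lsum_S_eval[OF c, symmetric])
      finally show "dual_mult R C \<Delta> m h c = lsum S (map (\<lambda>(n, c). dual_mult R C \<Delta> n (dual_unit R C \<epsilon> (h c))) xs) c" .
    qed
    then show "ract (dual_rmod R C \<Delta> \<epsilon>) m h = lsum (dual_rmod R C \<Delta> \<epsilon>)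
      (map (\<lambda>(n, c). ract (dual_rmod R C \<Delta> \<epsilon>) n (dual_unit R C \<epsilon> (h c))) xs)"
      by (simp only: rmod_ract lsum_rmod)
  qed
  show "fin_nbhd R C f F \<inter> Rat R C \<Delta> \<epsilon> (dual_rmod R C \<Delta> \<epsilon>) \<noteq> {}" using mF mR by blast
qed

end

theorem corollary2p6:
  fixes R :: "'r ring" and C :: "('r, 'c) bimod"
    and \<Delta> :: "'c \<Rightarrow> ('c \<times> 'c) list" and \<epsilon> :: "'c \<Rightarrow> 'r"
    and I :: "'i set" and D :: "'i \<Rightarrow> 'c set"
  assumes "coring R C \<Delta> \<epsilon>"
    and "left_alpha R C"
    and "internal_direct_sum C I D"
    and "\<forall>i\<in>I. left_subcomodule R C \<Delta> (D i)"
    and "\<forall>i\<in>I. fin_gen_left R C (D i)"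
  shows "dense_finite_top R C (Rat R C \<Delta> \<epsilon> (dual_rmod R C \<Delta> \<epsilon>)) \<and>
    (\<forall>(L :: ('c \<Rightarrow> 'r, 'l) rmodule) (M :: ('c \<Rightarrow> 'r, 'm) rmodule) (N :: ('c \<Rightarrow> 'r, 'n) rmodule) f g.
       right_module (dual_ring R C \<Delta> \<epsilon>) L \<and> right_module (dual_ring R C \<Delta> \<epsilon>) M \<and>
       right_module (dual_ring R C \<Delta> \<epsilon>) N \<and>
       rmod_hom (dual_ring R C \<Delta> \<epsilon>) L M f \<and> rmod_hom (dual_ring R C \<Delta> \<epsilon>) M N g \<and>
       f ` carrier L = {x \<in> carrier M. g x = \<zero>\<^bsub>N\<^esub>}
       \<longrightarrow> f ` Rat R C \<Delta> \<epsilon> L = {x \<in> Rat R C \<Delta> \<epsilon> M. g x = \<zero>\<^bsub>N\<^esub>})"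
proof -
  interpret dsum R C \<Delta> \<epsilon> I D
    by (intro dsum.intro cor.intro dsum_axioms.intro) (rule assms)+
  show ?thesis
  proof (intro conjI allI impI)
    show "dense_finite_top R C (Rat R C \<Delta> \<epsilon> (dual_rmod R C \<Delta> \<epsilon>))" by (rule dense)
    fix L :: "('c \<Rightarrow> 'r, 'l) rmodule" and M :: "('c \<Rightarrow> 'r, 'm) rmodule" and N :: "('c \<Rightarrow> 'r, 'n) rmodule" and f g
    assume a: "right_module (dual_ring R C \<Delta> \<epsilon>) L \<and> right_module (dual_ring R C \<Delta> \<epsilon>) M \<and>
       right_module (dual_ring R C \<Delta> \<epsilon>) N \<and>
       rmod_hom (dual_ring R C \<Delta> \<epsilon>) L M f \<and> rmod_hom (dual_ring R C \<Delta> \<epsilon>) M N g \<and>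
       f ` carrier L = {x \<in> carrier M. g x = \<zero>\<^bsub>N\<^esub>}"
    show "f ` Rat R C \<Delta> \<epsilon> L = {x \<in> Rat R C \<Delta> \<epsilon> M. g x = \<zero>\<^bsub>N\<^esub>}"
      using a by (intro exact_from_dense[OF dense]) blast+
  qed
qed


end
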